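(* There is an algorithm that, given an instance $\langle A,f,c\rangle$ with $f$ additive (specified by the values $f(\{i\})$ and costs $c_i$, $i\in A$, $|A|=n$), a budget $B\in(0,1]$, and $\varepsilon\in(0,1)$, outputs a set $T\subseteq A$ with $p(T)\le B$ and $$g(T)\ge(1-\varepsilon)\cdot\textsc{Max-Profit}(B),$$ in time polynomial in $n$ and $1/\varepsilon$.
   Context: An instance $\langle A,f,c\rangle$ consists of a finite set $A$ of agents, a monotone nondecreasing $f:2^A\to[0,1]$, and costs $c_i\ge0$. $f$ is additive if $f(S)=\sum_{i\in S}f(\{i\})$ with $f(\{i\})\ge0$. For $S\subseteq A$, $i\in S$: $f_S(i)=f(S)-f(S\setminus\{i\})$; $p(S)=\sum_{i\in S}c_i/f_S(i)$ (conventions: $0$ if $c_i=0=f_S(i)$, $\infty$ if $c_i>0=f_S(i)$), so for additive $f$, $p(S)=\sum_{i\in S}c_i/f(\{i\})$; the profit is $g(S)=(1-p(S))f(S)$, and $\textsc{Max-Profit}(B)=\max\{g(S):S\subseteq A,\ p(S)\le B\}$. *)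

theory Defs
  imports "HOL-Analysis.Analysis"
begin

definition marginal :: "('a set \<Rightarrow> real) \<Rightarrow> 'a set \<Rightarrow> 'a \<Rightarrow> real" where
  "marginal f S i = f S - f (S - {i})"

definition price_term :: "('a set \<Rightarrow> real) \<Rightarrow> ('a \<Rightarrow> real) \<Rightarrow> 'a set \<Rightarrow> 'a \<Rightarrow> ereal" where
  "price_term f c S i =
     (if marginal f S i = 0 then (if c i = 0 then 0 else \<infinity>)
      else ereal (c i / marginal f S i))"

definition price :: "('a set \<Rightarrow> real) \<Rightarrow> ('a \<Rightarrow> real) \<Rightarrow> 'a set \<Rightarrow> ereal" where
  "price f c S = (\<Sum>i\<in>S. price_term f c S i)"

text \<open>Profit g(S) = (1 - p(S)) f(S); only meaningful (and only used) when p(S) is finite.\<close>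
definition profit :: "('a set \<Rightarrow> real) \<Rightarrow> ('a \<Rightarrow> real) \<Rightarrow> 'a set \<Rightarrow> real" where
  "profit f c S = (1 - real_of_ereal (price f c S)) * f S"

definition max_profit :: "'a set \<Rightarrow> ('a set \<Rightarrow> real) \<Rightarrow> ('a \<Rightarrow> real) \<Rightarrow> real \<Rightarrow> real" where
  "max_profit A f c B = Max {profit f c S | S. S \<subseteq> A \<and> price f c S \<le> ereal B}"

definition additive_fun :: "('a \<Rightarrow> real) \<Rightarrow> 'a set \<Rightarrow> real" where
  "additive_fun v S = (\<Sum>i\<in>S. v i)"

type_synonym state = "nat \<Rightarrow> real"

datatype aexp = N real | R aexp | Plus aexp aexp | Minus aexp aexp | Mult aexp aexp
  | Divide aexp aexp | Floor aexp

datatype bexp = Less aexp aexp | Not bexp | And bexp bexp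

datatype com = SKIP | Assign aexp aexp | Seq com com | If bexp com com | While bexp com

definition reg_index :: "real \<Rightarrow> nat" where
  "reg_index x = nat \<lfloor>x\<rfloor>"

fun aval :: "aexp \<Rightarrow> state \<Rightarrow> real" where
  "aval (N r) s = r"
| "aval (R e) s = s (reg_index (aval e s))"
| "aval (Plus a b) s = aval a s + aval b s"
| "aval (Minus a b) s = aval a s - aval b s"
| "aval (Mult a b) s = aval a s * aval b s"
| "aval (Divide a b) s = aval a s / aval b s"
| "aval (Floor a) s = of_int \<lfloor>aval a s\<rfloor>"

fun bval :: "bexp \<Rightarrow> state \<Rightarrow> bool" where
  "bval (Less a b) s = (aval a s < aval b s)"
| "bval (Not b) s = (\<not> bval b s)"
| "bval (And a b) s = (bval a s \<and> bval b s)"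

text \<open>Big-step semantics with step counting: exec c s t s' means c started in s
  terminates in s' after t steps (each atomic command / test costs one step).\<close>
inductive exec :: "com \<Rightarrow> state \<Rightarrow> nat \<Rightarrow> state \<Rightarrow> bool" where
  Skip: "exec SKIP s 1 s"
| Assign: "exec (Assign l e) s 1 (s(reg_index (aval l s) := aval e s))"
| Seq: "exec c1 s t1 s1 \<Longrightarrow> exec c2 s1 t2 s2 \<Longrightarrow> exec (Seq c1 c2) s (t1 + t2) s2"
| IfTrue: "bval b s \<Longrightarrow> exec c1 s t s' \<Longrightarrow> exec (If b c1 c2) s (Suc t) s'"
| IfFalse: "\<not> bval b s \<Longrightarrow> exec c2 s t s' \<Longrightarrow> exec (If b c1 c2) s (Suc t) s'"
| WhileFalse: "\<not> bval b s \<Longrightarrow> exec (While b c) s 1 s"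
| WhileTrue: "bval b s \<Longrightarrow> exec c s t1 s1 \<Longrightarrow> exec (While b c) s1 t2 s2 \<Longrightarrow>
    exec (While b c) s (Suc (t1 + t2)) s2"

definition input_state :: "nat \<Rightarrow> (nat \<Rightarrow> real) \<Rightarrow> (nat \<Rightarrow> real) \<Rightarrow> real \<Rightarrow> real \<Rightarrow> state" where
  "input_state n v c B eps = (\<lambda>k.
     if k = 0 then real n
     else if k = 1 then B
     else if k = 2 then eps
     else if 3 \<le> k \<and> k < 3 + 2 * n then
       (if even (k - 3) then v ((k - 3) div 2) else c ((k - 3) div 2))
     else 0)"

definition output_set :: "nat \<Rightarrow> state \<Rightarrow> nat set" where
  "output_set n s = {i. i < n \<and> s (3 + 2 * n + i) \<noteq> 0}"

end

theory Submission
  imports Defs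
begin
definition spec :: "com \<Rightarrow> state \<Rightarrow> (nat \<Rightarrow> state \<Rightarrow> bool) \<Rightarrow> bool" where
  "spec c s P \<longleftrightarrow> (\<exists>t s'. exec c s t s' \<and> P t s')"

lemma spec_mono: "spec c s P \<Longrightarrow> (\<And>t s'. P t s' \<Longrightarrow> Q t s') \<Longrightarrow> spec c s Q"
  unfolding spec_def by blast

lemma spec_SeqI: "spec c1 s (\<lambda>t1 s1. spec c2 s1 (\<lambda>t2 s2. Q (t1+t2) s2)) \<Longrightarrow> spec (Seq c1 c2) s Q"
  unfolding spec_def by (blast intro: exec.Seq)

lemma spec_SkipI: "Q 1 s \<Longrightarrow> spec SKIP s Q"
  unfolding spec_def by (blast intro: exec.Skip)

lemma spec_AssignI: "reg_index (aval l s) = a \<Longrightarrow> aval e s = x \<Longrightarrow> Q 1 (s(a := x)) \<Longrightarrow> spec (Assign l e) s Q"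
  unfolding spec_def by (metis exec.Assign)

lemma spec_IfI: "(bval b s \<Longrightarrow> spec c1 s (\<lambda>t. Q (Suc t))) \<Longrightarrow> (\<not> bval b s \<Longrightarrow> spec c2 s (\<lambda>t. Q (Suc t)))
  \<Longrightarrow> spec (If b c1 c2) s Q"
  unfolding spec_def by (cases "bval b s") (blast intro: exec.IfTrue exec.IfFalse)+

lemma WhileFalse1: "\<not> bval b s \<Longrightarrow> exec (While b c) s (Suc 0) s"
  using exec.WhileFalse by simp

lemma spec_While_aux:
  assumes step: "\<And>s. I s \<Longrightarrow> bval b s \<Longrightarrow> spec c s (\<lambda>t s'. I s' \<and> m s' < m s \<and> t \<le> T)"
  shows "I s \<Longrightarrow> m s \<le> K \<Longrightarrow> \<exists>t s'. exec (While b c) s t s' \<and> I s' \<and> \<not> bval b s' \<and> t \<le> (K+1)*(T+1)"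
proof (induction K arbitrary: s)
  case 0
  then have "\<not> bval b s" using step[of s] unfolding spec_def by fastforce
  then show ?case using 0 by (intro exI[of _ 1] exI[of _ s]) (auto intro: WhileFalse1)
next
  case (Suc K)
  show ?case
  proof (cases "bval b s")
    case False
    then show ?thesis using Suc by (intro exI[of _ 1] exI[of _ s]) (auto intro: WhileFalse1)
  next
    case True
    from step[OF Suc.prems(1) True] obtain t1 s1 where e1: "exec c s t1 s1" and
      h: "I s1" "m s1 < m s" "t1 \<le> T" unfolding spec_def by blast
    from Suc.IH[OF h(1)] h(2) Suc.prems(2) obtain t2 s2 where
      "exec (While b c) s1 t2 s2" "I s2" "\<not> bval b s2" "t2 \<le> (K+1)*(T+1)" by fastforce
    then show ?thesis using e1 True h(3)
      by (intro exI[of _ "Suc (t1+t2)"] exI[of _ s2]) (auto intro: exec.WhileTrue)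
  qed
qed

lemma spec_While:
  assumes "I s"
    and "\<And>s. I s \<Longrightarrow> bval b s \<Longrightarrow> spec c s (\<lambda>t s'. I s' \<and> m s' < m s \<and> t \<le> T)"
    and "\<And>t s'. I s' \<Longrightarrow> \<not> bval b s' \<Longrightarrow> t \<le> (m s + 1) * (T + 1) \<Longrightarrow> P t s'"
  shows "spec (While b c) s P"
  using spec_While_aux[of I b c m T s "m s", OF assms(2) assms(1)] assms(3) unfolding spec_def by blast

lemma reg_index_nat[simp]: "reg_index (real k) = k"
  by (simp add: reg_index_def)

lemma reg_index_0[simp]: "reg_index 0 = 0" and reg_index_1[simp]: "reg_index 1 = 1"
  and reg_index_num[simp]: "reg_index (numeral k) = numeral k"
  by (simp_all add: reg_index_def)

lemma reg_index_eq: "x = real k \<Longrightarrow> reg_index x = k"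
  by simp

definition vA :: "nat \<Rightarrow> aexp" where "vA k = Plus (N (real k + 3)) (Mult (N 3) (R (N 0)))"
abbreviation rd :: "nat \<Rightarrow> aexp" where "rd k \<equiv> R (vA k)"
definition tA :: "nat \<Rightarrow> aexp \<Rightarrow> aexp" where
  "tA off e = Plus (Plus (rd 8) (N (real off))) (Mult (N 3) e)"
definition vIn :: "aexp \<Rightarrow> aexp" where "vIn e = R (Plus (N 3) (Mult (N 2) e))"
definition cIn :: "aexp \<Rightarrow> aexp" where "cIn e = R (Plus (N 4) (Mult (N 2) e))"
definition outA :: aexp where "outA = Plus (Plus (N 3) (Mult (N 2) (R (N 0)))) (rd 1)"
definition geq :: "aexp \<Rightarrow> aexp \<Rightarrow> bexp" where "geq a b = Not (Less a b)"

definition body4 :: com where "body4 =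
  Seq (Assign (vA 3) (Minus (rd 3) (N 1)))
  (Seq (Assign (vA 12) (Minus (R (tA 0 (Minus (rd 3) (rd 4)))) (rd 5)))
   (If (And (geq (rd 12) (Minus (N 3) (R (N 1)))) (Less (R (tA 0 (rd 3))) (rd 12)))
      (Seq (Assign (tA 0 (rd 3)) (rd 12))
      (Seq (Assign (tA 1 (rd 3)) (Plus (R (tA 1 (Minus (rd 3) (rd 4)))) (rd 6)))
      (Seq (Assign (tA 2 (rd 3)) (Plus (R (tA 2 (Minus (rd 3) (rd 4)))) (rd 2)))
           (If (Less (rd 9) (Mult (Minus (R (tA 0 (rd 3))) (N 2)) (R (tA 1 (rd 3)))))
               (Seq (Assign (vA 9) (Mult (Minus (R (tA 0 (rd 3))) (N 2)) (R (tA 1 (rd 3)))))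
                    (Assign (vA 10) (R (tA 2 (rd 3)))))
               SKIP))))
      SKIP))"

definition loop4 :: com where "loop4 = While (Less (rd 4) (rd 3)) body4"

definition body3 :: com where "body3 =
  Seq (Assign (vA 6) (vIn (rd 1)))
  (Seq (If (And (Less (N 0) (rd 6)) (geq (rd 11) (rd 6)))
          (Seq (Assign (vA 5) (Divide (cIn (rd 1)) (rd 6)))
          (Seq (Assign (vA 4) (Floor (Divide (Mult (rd 6) (R (N 0))) (Mult (R (N 2)) (rd 11)))))
          (Seq (Assign (vA 3) (Plus (rd 7) (N 1))) loop4)))
          SKIP)
  (Seq (Assign (vA 2) (Mult (N 2) (rd 2))) (Assign (vA 1) (Plus (rd 1) (N 1)))))"

definition loop3 :: com where "loop3 = While (Less (rd 1) (R (N 0))) body3"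

definition body1 :: com where "body1 =
  Seq (Assign (vA 11) (vIn (rd 0)))
  (Seq (If (Less (N 0) (rd 11))
         (Seq (Assign (vA 8) (Plus (vA 16) (Mult (Mult (N 3) (Plus (rd 7) (N 1))) (rd 0))))
         (Seq (Assign (tA 0 (N 0)) (N 3))
         (Seq (Assign (vA 1) (N 0)) (Seq (Assign (vA 2) (N 1)) loop3))))
         SKIP)
   (Assign (vA 0) (Plus (rd 0) (N 1))))"

definition loop1 :: com where "loop1 = While (Less (rd 0) (R (N 0))) body1"

definition body6 :: com where "body6 =
  Seq (Assign outA (Minus (Floor (Divide (rd 10) (rd 2))) (Mult (N 2) (Floor (Divide (rd 10) (Mult (N 2) (rd 2)))))))
   (Seq (Assign (vA 2) (Mult (N 2) (rd 2))) (Assign (vA 1) (Plus (rd 1) (N 1))))"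

definition loop6 :: com where "loop6 = While (Less (rd 1) (R (N 0))) body6"

definition prog :: com where "prog =
  Seq (Assign (vA 7) (Floor (Divide (Mult (R (N 0)) (R (N 0))) (R (N 2)))))
  (Seq loop1 (Seq (Assign (vA 1) (N 0)) (Seq (Assign (vA 2) (N 1)) loop6)))"

locale inst =
  fixes n :: nat and v c :: "nat \<Rightarrow> real" and B eps :: real
  assumes vpos: "\<And>i. i < n \<Longrightarrow> 0 \<le> v i" and cpos: "\<And>i. i < n \<Longrightarrow> 0 \<le> c i"
    and B0: "0 < B" and B1: "B \<le> 1" and e0: "0 < eps" and e1: "eps < 1"
begin

definition vr :: "nat \<Rightarrow> nat" where "vr k = 3 + 3*n + k"
definition Q :: nat where "Q = nat \<lfloor>real n * real n / eps\<rfloor>"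
definition baseJ :: "nat \<Rightarrow> nat" where "baseJ j = vr 16 + 3*(Q+1)*j"

definition inp :: "state \<Rightarrow> bool" where
  "inp s \<longleftrightarrow> s 0 = real n \<and> s 1 = B \<and> s 2 = eps \<and> (\<forall>i<n. s (3+2*i) = v i \<and> s (4+2*i) = c i)"

lemma inp_upd[simp]: "3 + 2*n \<le> a \<Longrightarrow> inp (s(a := x)) = inp s"
  unfolding inp_def by auto

lemma vr_ge[simp]: "3 + 2*n \<le> vr k" by (simp add: vr_def)
lemma vr_inj[simp]: "vr k = vr k' \<longleftrightarrow> k = k'" by (simp add: vr_def)
lemma vr_ne0[simp]: "vr k \<noteq> 0" "vr k \<noteq> 1" "vr k \<noteq> 2" "vr k \<noteq> Suc 0"
  "0 \<noteq> vr k" "1 \<noteq> vr k" "2 \<noteq> vr k" "Suc 0 \<noteq> vr k" by (simp_all add: vr_def)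

lemma aval_vA[simp]: "s 0 = real n \<Longrightarrow> aval (vA k) s = real (vr k)"
  by (simp add: vA_def vr_def algebra_simps)

lemma ridx_vA[simp]: "s 0 = real n \<Longrightarrow> reg_index (aval (vA k) s) = vr k"
  by simp

lemma aval_tA: "s 0 = real n \<Longrightarrow> s (vr 8) = real b \<Longrightarrow> aval e s = real q \<Longrightarrow>
   aval (tA off e) s = real (b + 3*q + off)"
  by (simp add: tA_def algebra_simps)

lemma ridx_tA: "s 0 = real n \<Longrightarrow> s (vr 8) = real b \<Longrightarrow> aval e s = real q \<Longrightarrow>
   reg_index (aval (tA off e) s) = b + 3*q + off"
  by (simp only: aval_tA reg_index_nat)

lemma read_tA: "s 0 = real n \<Longrightarrow> s (vr 8) = real b \<Longrightarrow> aval e s = real q \<Longrightarrow>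
   aval (R (tA off e)) s = s (b + 3*q + off)"
  by (simp only: aval.simps ridx_tA)

lemma spec_vA: "s 0 = real n \<Longrightarrow> aval e s = x \<Longrightarrow> P 1 (s(vr k := x)) \<Longrightarrow> spec (Assign (vA k) e) s P"
  by (rule spec_AssignI) auto

lemma spec_tA: "s 0 = real n \<Longrightarrow> s (vr 8) = real b \<Longrightarrow> aval e s = real q \<Longrightarrow> aval x s = y
   \<Longrightarrow> P 1 (s(b + 3*q + off := y)) \<Longrightarrow> spec (Assign (tA off e) x) s P"
  by (rule spec_AssignI[OF ridx_tA]) auto

end

context inst begin

definition items :: "nat \<Rightarrow> nat set" where "items j = {i. i < n \<and> 0 < v i \<and> v i \<le> v j}"
definition rn :: "nat \<Rightarrow> nat \<Rightarrow> nat" where "rn j i = nat \<lfloor>v i * real n / (eps * v j)\<rfloor>"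
definition dl :: "nat \<Rightarrow> real" where "dl j = eps * v j / real n"
definition W :: "nat set \<Rightarrow> real" where "W T = (\<Sum>i\<in>T. c i / v i)"
definition Vs :: "nat set \<Rightarrow> real" where "Vs T = (\<Sum>i\<in>T. v i)"
definition code :: "nat set \<Rightarrow> real" where "code T = (\<Sum>i\<in>T. 2^i)"
definition prof :: "nat set \<Rightarrow> real" where "prof T = (1 - W T) * Vs T"
definition valid :: "nat set \<Rightarrow> bool" where
  "valid T \<longleftrightarrow> T \<subseteq> {..<n} \<and> (\<forall>i\<in>T. 0 < v i) \<and> W T \<le> B"

definition upd :: "nat \<Rightarrow> nat \<Rightarrow> (nat \<Rightarrow> real\<times>real\<times>real) \<Rightarrow> nat \<Rightarrow> real\<times>real\<times>real" where
  "upd j i T q = (let e = T (q - rn j i); un = fst e - c i / v i in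
     if rn j i \<le> q \<and> 3 - B \<le> un \<and> fst (T q) < un then (un, fst (snd e) + v i, snd (snd e) + 2^i) else T q)"

fun tab :: "nat \<Rightarrow> nat \<Rightarrow> nat \<Rightarrow> real\<times>real\<times>real" where
  "tab j 0 = (\<lambda>q. if q = 0 then (3,0,0) else (0,0,0))"
| "tab j (Suc m) = (if m \<in> items j then upd j m (tab j m) else tab j m)"

definition eprof :: "real\<times>real\<times>real \<Rightarrow> real" where "eprof e = (fst e - 2) * fst (snd e)"

lemma w_nonneg: "i \<in> items j \<Longrightarrow> 0 \<le> c i / v i"
  using cpos unfolding items_def by auto

lemma W_nonneg: "T \<subseteq> items j \<Longrightarrow> 0 \<le> W T"
  unfolding W_def by (rule sum_nonneg) (use w_nonneg in blast)

lemma finite_items[simp]: "finite (items j)" unfolding items_def by auto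

lemma tab_sound:
  "3 - B \<le> fst (tab j m q) \<Longrightarrow>
   \<exists>T. T \<subseteq> items j \<inter> {..<m} \<and> tab j m q = (3 - W T, Vs T, code T) \<and> sum (rn j) T = q"
proof (induction m arbitrary: q)
  case 0
  then have "q = 0" using B1 by (auto split: if_splits)
  then show ?case by (intro exI[of _ "{}"]) (simp add: W_def Vs_def code_def)
next
  case (Suc m)
  show ?case
  proof (cases "m \<in> items j")
    case False
    then have eq: "tab j (Suc m) q = tab j m q" by simp
    from Suc.IH[of q] Suc.prems eq obtain T where
      "T \<subseteq> items j \<inter> {..<m}" "tab j m q = (3 - W T, Vs T, code T)" "sum (rn j) T = q" by auto
    then show ?thesis using eq by (intro exI[of _ T]) auto
  next
    case True
    define e where "e = tab j m (q - rn j m)"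
    define un where "un = fst e - c m / v m"
    show ?thesis
    proof (cases "rn j m \<le> q \<and> 3 - B \<le> un \<and> fst (tab j m q) < un")
      case False
      then have eq: "tab j (Suc m) q = tab j m q" using True
        by (auto simp add: upd_def Let_def e_def un_def)
      from Suc.IH[of q] Suc.prems eq obtain T where
        "T \<subseteq> items j \<inter> {..<m}" "tab j m q = (3 - W T, Vs T, code T)" "sum (rn j) T = q" by auto
      then show ?thesis using eq by (intro exI[of _ T]) auto
    next
      case c1: True
      then have eq: "tab j (Suc m) q = (un, fst (snd e) + v m, snd (snd e) + 2^m)" using True
        by (simp add: upd_def Let_def e_def un_def)
      have "3 - B \<le> fst e" using c1 w_nonneg[OF True] unfolding un_def by linarith
      from Suc.IH[of "q - rn j m"] this obtain T where
        T: "T \<subseteq> items j \<inter> {..<m}" "e = (3 - W T, Vs T, code T)" "sum (rn j) T = q - rn j m"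
        unfolding e_def by auto
      have mT: "m \<notin> T" using T(1) by auto
      have fT: "finite T" using T(1) finite_items finite_subset by blast
      show ?thesis
        apply (intro exI[of _ "insert m T"])
        using T mT fT c1 True eq
        by (auto simp: W_def Vs_def code_def un_def)
    qed
  qed
qed

lemma tab_mono: "fst (tab j m q) \<le> fst (tab j (Suc m) q)"
  by (auto simp: upd_def Let_def)

lemma tab_complete:
  "S \<subseteq> items j \<inter> {..<m} \<Longrightarrow> W S \<le> B \<Longrightarrow> 3 - W S \<le> fst (tab j m (sum (rn j) S))"
proof (induction m arbitrary: S)
  case 0
  then have "S = {}" by auto
  then show ?case by (simp add: W_def)
next
  case (Suc m)
  show ?case
  proof (cases "m \<in> S")
    case False
    then have "S \<subseteq> items j \<inter> {..<m}" using Suc.prems(1) by (auto simp: subset_iff less_Suc_eq)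
    from Suc.IH[OF this Suc.prems(2)] show ?thesis using tab_mono order_trans by blast
  next
    case True
    define S' where "S' = S - {m}"
    have mi: "m \<in> items j" using True Suc.prems by auto
    have fS: "finite S" using Suc.prems(1) finite_items finite_subset by blast
    have S'sub: "S' \<subseteq> items j \<inter> {..<m}" using Suc.prems(1) unfolding S'_def by auto
    have WS: "W S = c m / v m + W S'" unfolding W_def S'_def using True fS
      by (simp add: sum.remove)
    have sS: "sum (rn j) S = rn j m + sum (rn j) S'" unfolding S'_def using True fS
      by (simp add: sum.remove)
    have "0 \<le> W S'" using W_nonneg S'sub by blast
    have WS'B: "W S' \<le> B" using WS w_nonneg[OF mi] Suc.prems(2) by linarith
    from Suc.IH[OF S'sub WS'B] have ih: "3 - W S' \<le> fst (tab j m (sum (rn j) S'))" .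
    define q where "q = sum (rn j) S"
    define e where "e = tab j m (q - rn j m)"
    define un where "un = fst e - c m / v m"
    have "e = tab j m (sum (rn j) S')" unfolding e_def q_def sS by simp
    then have un_ge: "3 - W S \<le> un" using ih WS unfolding un_def by simp
    have "3 - W S \<le> fst (upd j m (tab j m) q)"
      using un_ge Suc.prems(2) unfolding upd_def Let_def e_def[symmetric] un_def[symmetric]
      by (auto simp: q_def sS)
    then show ?thesis using mi by (simp add: q_def)
  qed
qed

end

lemma three_neq[simp]:
  "(3*a + 1 = (3::nat)*b) = False" "(3*a = (3::nat)*b + 1) = False"
  "(3*a + 2 = (3::nat)*b) = False" "(3*a = (3::nat)*b + 2) = False"
  "(3*a + 2 = (3::nat)*b + 1) = False" "(3*a + 1 = (3::nat)*b + 2) = False"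
  by presburger+

context inst begin

definition mem :: "nat \<Rightarrow> state \<Rightarrow> nat \<Rightarrow> real\<times>real\<times>real" where
  "mem j s q = (s (baseJ j + 3*q), s (baseJ j + 3*q + 1), s (baseJ j + 3*q + 2))"

lemma vr_lt_base[simp]: "k < 16 \<Longrightarrow> vr k < baseJ j + x"
  by (simp add: baseJ_def vr_def)
lemma vr_ne_base[simp]: "k < 16 \<Longrightarrow> vr k \<noteq> baseJ j + x" "k < 16 \<Longrightarrow> baseJ j + x \<noteq> vr k"
  "k < 16 \<Longrightarrow> vr k \<noteq> baseJ j + x + y" "k < 16 \<Longrightarrow> baseJ j + x + y \<noteq> vr k"
  by (simp_all add: baseJ_def vr_def)
lemma vr_ne_base_Suc[simp]: "k < 16 \<Longrightarrow> vr k \<noteq> Suc (baseJ j + x)" "k < 16 \<Longrightarrow> Suc (baseJ j + x) \<noteq> vr k"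
  "k < 16 \<Longrightarrow> vr k \<noteq> Suc (Suc (baseJ j + x))" "k < 16 \<Longrightarrow> Suc (Suc (baseJ j + x)) \<noteq> vr k"
  "Suc (baseJ j + x) \<noteq> 0" "Suc (baseJ j + x) \<noteq> Suc 0" "0 \<noteq> Suc (baseJ j + x)" "Suc 0 \<noteq> Suc (baseJ j + x)"
  "Suc (baseJ j + x) \<noteq> 2" "2 \<noteq> Suc (baseJ j + x)"
  by (simp_all add: baseJ_def vr_def)
lemma vr_lt_baseJ[simp]: "k < 16 \<Longrightarrow> vr k < baseJ j" "k < 16 \<Longrightarrow> (baseJ j \<le> vr k) = False"
  by (simp_all add: baseJ_def vr_def)
lemma base_ge[simp]: "3 + 2*n \<le> baseJ j + x" "3 + 2*n \<le> baseJ j"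
  "3 + 2*n \<le> Suc (baseJ j + x)" "3 + 2*n \<le> Suc (Suc (baseJ j + x))" by (simp_all add: baseJ_def vr_def)
lemma base_ne_small[simp]: "baseJ j + x \<noteq> 0" "baseJ j + x \<noteq> 1" "baseJ j + x \<noteq> 2"
  "baseJ j + x + y \<noteq> 0" "baseJ j + x + y \<noteq> 1" "baseJ j + x + y \<noteq> 2"
  "baseJ j + x \<noteq> Suc 0" "baseJ j + x + y \<noteq> Suc 0"
  "0 \<noteq> baseJ j + x" "Suc 0 \<noteq> baseJ j + x" "2 \<noteq> baseJ j + x"
  "0 \<noteq> baseJ j + x + y" "Suc 0 \<noteq> baseJ j + x + y" "2 \<noteq> baseJ j + x + y"
  "baseJ j \<noteq> 0" "baseJ j \<noteq> Suc 0"
  by (simp_all add: baseJ_def vr_def)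

lemma mem_upd_low: "a < baseJ j \<Longrightarrow> mem j (s(a := x)) q = mem j s q"
  by (simp add: mem_def)
lemma mem_upd_vr[simp]: "k < 16 \<Longrightarrow> mem j (s(vr k := x)) = mem j s"
  by (rule ext, rule mem_upd_low) (simp add: baseJ_def vr_def)
lemma mem_upd0: "mem j (s(baseJ j + 3*q := x)) = (mem j s)(q := (x, fst (snd (mem j s q)), snd (snd (mem j s q))))"
  by (rule ext) (simp add: mem_def)
lemma mem_upd1: "mem j (s(baseJ j + 3*q + 1 := x)) = (mem j s)(q := (fst (mem j s q), x, snd (snd (mem j s q))))"
  by (rule ext) (simp add: mem_def)
lemma mem_upd2: "mem j (s(baseJ j + 3*q + 2 := x)) = (mem j s)(q := (fst (mem j s q), fst (snd (mem j s q)), x))"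
  by (rule ext) (simp add: mem_def)

lemma mem_read: "s (baseJ j + 3*q) = fst (mem j s q)" "s (baseJ j + 3*q + 1) = fst (snd (mem j s q))"
  "s (baseJ j + 3*q + 2) = snd (snd (mem j s q))"
  by (simp_all add: mem_def)

definition bestOK :: "state \<Rightarrow> bool" where
  "bestOK s \<longleftrightarrow> (\<exists>T. valid T \<and> s (vr 9) = prof T \<and> s (vr 10) = code T)"

lemma prof_nonneg: "valid T \<Longrightarrow> 0 \<le> prof T"
  unfolding valid_def prof_def Vs_def using B1 vpos
  by (intro mult_nonneg_nonneg sum_nonneg) auto

lemma bestOK_nonneg: "bestOK s \<Longrightarrow> 0 \<le> s (vr 9)"
  unfolding bestOK_def using prof_nonneg by auto

definition ctx :: "nat \<Rightarrow> real \<Rightarrow> state \<Rightarrow> bool" where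
  "ctx jj b0 s \<longleftrightarrow> inp s \<and> jj < n \<and> 0 < v jj \<and> s (vr 0) = real jj \<and> s (vr 7) = real Q
     \<and> s (vr 11) = v jj \<and> s (vr 8) = real (baseJ jj) \<and> b0 \<le> s (vr 9) \<and> bestOK s
     \<and> (\<forall>q\<le>Q. 3 - B \<le> fst (mem jj s q) \<longrightarrow> eprof (mem jj s q) \<le> s (vr 9))
     \<and> (\<forall>a\<ge>baseJ (Suc jj). s a = 0)"

definition I4 :: "nat \<Rightarrow> real \<Rightarrow> nat \<Rightarrow> nat \<Rightarrow> state \<Rightarrow> bool" where
  "I4 jj b0 m k s \<longleftrightarrow> ctx jj b0 s \<and> m < n \<and> m \<in> items jj \<and> s (vr 1) = real m \<and> s (vr 2) = 2^m
     \<and> s (vr 6) = v m \<and> s (vr 5) = c m / v m \<and> s (vr 4) = real (rn jj m) \<and> s (vr 3) = real k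
     \<and> rn jj m \<le> k \<and> k \<le> Q + 1
     \<and> (\<forall>q\<le>Q. mem jj s q = (if k \<le> q then upd jj m (tab jj m) q else tab jj m q))"

lemma entry_valid:
  assumes "3 - B \<le> fst (tab jj m q)"
  shows "\<exists>T. valid T \<and> eprof (tab jj m q) = prof T \<and> snd (snd (tab jj m q)) = code T"
proof -
  from tab_sound[OF assms] obtain T where T: "T \<subseteq> items jj \<inter> {..<m}"
    "tab jj m q = (3 - W T, Vs T, code T)" by blast
  have "valid T" using T assms unfolding valid_def items_def by auto
  then show ?thesis using T by (intro exI[of _ T]) (auto simp: eprof_def prof_def)
qed

lemma I4_step:
  assumes I: "I4 jj b0 m k s" and rk: "rn jj m < k"
    and h1: "inp s'"
    and h2: "s' (vr 0) = s (vr 0)" "s' (vr 1) = s (vr 1)" "s' (vr 2) = s (vr 2)" "s' (vr 4) = s (vr 4)"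
       "s' (vr 5) = s (vr 5)" "s' (vr 6) = s (vr 6)" "s' (vr 7) = s (vr 7)" "s' (vr 8) = s (vr 8)"
       "s' (vr 11) = s (vr 11)"
    and h3: "s' (vr 3) = real (k - 1)"
    and h4: "mem jj s' = (mem jj s)(k-1 := upd jj m (tab jj m) (k-1))"
    and h5: "\<forall>a\<ge>baseJ (Suc jj). s' a = 0"
    and h6: "bestOK s'" and h7: "s (vr 9) \<le> s' (vr 9)"
    and h8: "3 - B \<le> fst (mem jj s' (k-1)) \<longrightarrow> eprof (mem jj s' (k-1)) \<le> s' (vr 9)"
  shows "I4 jj b0 m (k - 1) s'"
proof -
  note I' = I[unfolded I4_def ctx_def]
  have memI: "\<forall>q\<le>Q. mem jj s q = (if k \<le> q then upd jj m (tab jj m) q else tab jj m q)"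
    using I' by blast
  have feas: "\<forall>q\<le>Q. 3 - B \<le> fst (mem jj s q) \<longrightarrow> eprof (mem jj s q) \<le> s (vr 9)"
    using I' by blast
  have A: "\<forall>q\<le>Q. mem jj s' q = (if k - 1 \<le> q then upd jj m (tab jj m) q else tab jj m q)"
  proof (intro allI impI)
    fix q assume "q \<le> Q"
    then show "mem jj s' q = (if k - 1 \<le> q then upd jj m (tab jj m) q else tab jj m q)"
      using memI h4 rk by (cases "q = k - 1") auto
  qed
  have Bf: "\<forall>q\<le>Q. 3 - B \<le> fst (mem jj s' q) \<longrightarrow> eprof (mem jj s' q) \<le> s' (vr 9)"
  proof (intro allI impI)
    fix q assume q: "q \<le> Q" "3 - B \<le> fst (mem jj s' q)"
    show "eprof (mem jj s' q) \<le> s' (vr 9)"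
    proof (cases "q = k - 1")
      case True then show ?thesis using h8 q by auto
    next
      case False
      then have "mem jj s' q = mem jj s q" using h4 by simp
      then show ?thesis using feas q h7 by fastforce
    qed
  qed
  show ?thesis unfolding I4_def ctx_def
    using I' h1 h2 h3 h5 h6 h7 A Bf rk by auto
qed

lemma bestOK_upd[simp]: "k \<noteq> 9 \<Longrightarrow> k \<noteq> 10 \<Longrightarrow> bestOK (s(vr k := x)) = bestOK s"
  unfolding bestOK_def by simp
lemma bestOK_upd_tab[simp]: "bestOK (s(baseJ j + x := y)) = bestOK s" "bestOK (s(baseJ j + x + z := y)) = bestOK s"
  unfolding bestOK_def by simp_all

lemma body4_spec:
  assumes I: "I4 jj b0 m k s" and rk: "rn jj m < k"
  shows "spec body4 s (\<lambda>t s'. I4 jj b0 m (k - 1) s' \<and> t \<le> 12)"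
proof -
  note I' = I[unfolded I4_def ctx_def inp_def]
  have n0: "s 0 = real n" and sB: "s 1 = B" and b8: "s (vr 8) = real (baseJ jj)"
    and k3: "s (vr 3) = real k" and r4: "s (vr 4) = real (rn jj m)" and w5: "s (vr 5) = c m / v m"
    and v6: "s (vr 6) = v m" and p2: "s (vr 2) = 2^m" and kQ: "k \<le> Q + 1"
    and memI: "\<forall>q\<le>Q. mem jj s q = (if k \<le> q then upd jj m (tab jj m) q else tab jj m q)"
    and mi: "m \<in> items jj" and bok: "bestOK s"
    and zero: "\<forall>a\<ge>baseJ (Suc jj). s a = 0"
    and feas: "\<forall>q\<le>Q. 3 - B \<le> fst (mem jj s q) \<longrightarrow> eprof (mem jj s q) \<le> s (vr 9)"
    using I' by blast+
  have inps: "inp s" using I unfolding I4_def ctx_def by blast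
  define r where "r = rn jj m"
  define q where "q = k - 1"
  have qk: "q < k" "r \<le> q" "q \<le> Q" "k = Suc q" using rk kQ by (auto simp: q_def r_def)
  define T where "T = tab jj m"
  have mq: "mem jj s q = T q"
  proof -
    have "mem jj s q = (if k \<le> q then upd jj m (tab jj m) q else tab jj m q)" using memI qk by blast
    moreover have "\<not> k \<le> q" using qk by simp
    ultimately show ?thesis unfolding T_def by (simp only: if_not_P if_False)
  qed
  have mqr: "mem jj s (q - r) = T (q - r)"
  proof -
    have "mem jj s (q-r) = (if k \<le> q-r then upd jj m (tab jj m) (q-r) else tab jj m (q-r))"
      using memI qk by (meson diff_le_self order_trans)
    moreover have "\<not> k \<le> q - r" using qk by simp
    ultimately show ?thesis unfolding T_def by (simp only: if_not_P if_False)
  qed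
  define e where "e = T (q - r)"
  define un where "un = fst e - c m / v m"
  define s1 where "s1 = s(vr 3 := real q)"
  define s2 where "s2 = s1(vr 12 := un)"
  have a1: "aval (Minus (rd 3) (N 1)) s = real q" using n0 k3 qk by simp
  have s1n: "s1 0 = real n" "s1 (vr 8) = real (baseJ jj)" "s1 (vr 3) = real q" "s1 (vr 4) = real r"
    "s1 (vr 5) = c m / v m"
    using n0 b8 r4 w5 by (simp_all add: s1_def r_def)
  have a2: "aval (Minus (R (tA 0 (Minus (rd 3) (rd 4)))) (rd 5)) s1 = un"
  proof -
    have "aval (Minus (rd 3) (rd 4)) s1 = real (q - r)" using s1n qk by (simp add: of_nat_diff)
    then have "aval (R (tA 0 (Minus (rd 3) (rd 4)))) s1 = s1 (baseJ jj + 3*(q-r) + 0)"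
      using s1n by (intro read_tA)
    also have "\<dots> = fst e" using mqr by (simp add: s1_def e_def mem_read)
    finally show ?thesis using s1n by (simp add: un_def)
  qed
  have s2n: "s2 0 = real n" "s2 (vr 8) = real (baseJ jj)" "s2 (vr 3) = real q" "s2 (vr 4) = real r"
    "s2 (vr 12) = un" "s2 (vr 6) = v m" "s2 (vr 2) = 2^m" "s2 (Suc 0) = B" "mem jj s2 = mem jj s"
    "s2 (vr 9) = s (vr 9)"
    using s1n v6 p2 sB by (simp_all add: s2_def s1_def)
  have rq: "aval (R (tA 0 (rd 3))) s2 = fst (T q)"
  proof -
    have "aval (R (tA 0 (rd 3))) s2 = s2 (baseJ jj + 3*q + 0)" using s2n by (intro read_tA) simp_all
    also have "\<dots> = fst (T q)" using mq s2n(9) by (simp add: mem_read)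
    finally show ?thesis .
  qed
  have cond_eq: "bval (And (geq (rd 12) (Minus (N 3) (R (N 1)))) (Less (R (tA 0 (rd 3))) (rd 12))) s2
      \<longleftrightarrow> (3 - B \<le> un \<and> fst (T q) < un)"
    by (simp only: bval.simps geq_def rq) (simp add: s2n not_less)
  have updq: "upd jj m T q = (if 3 - B \<le> un \<and> fst (T q) < un
       then (un, fst (snd e) + v m, snd (snd e) + 2^m) else T q)"
    using qk by (simp add: upd_def Let_def e_def un_def r_def)
  have tabS: "tab jj (Suc m) q = upd jj m T q" using mi by (simp add: T_def)
  have ctx_s2_base: "inp s2" using inps by (simp add: s2_def s1_def)
  show ?thesis unfolding body4_def
    apply (rule spec_SeqI)
    apply (rule spec_vA[OF n0 a1])
    apply (fold s1_def)
    apply (rule spec_SeqI)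
    apply (rule spec_vA[OF s1n(1) a2])
    apply (fold s2_def)
    apply (rule spec_IfI)
    subgoal premises cnd
    proof -
      have c: "3 - B \<le> un" "fst (T q) < un" using cnd cond_eq by auto
      have r0: "r \<noteq> 0"
      proof
        assume "r = 0"
        then have "e = T q" by (simp add: e_def)
        then show False using c w_nonneg[OF mi] unfolding un_def by simp
      qed
      have qr_ne: "q - r \<noteq> q" using r0 qk by simp
      define nt where "nt = (un, fst (snd e) + v m, snd (snd e) + 2^m)"
      have updq': "upd jj m T q = nt" using updq c by (simp add: nt_def)
      define s3 where "s3 = s2(baseJ jj + 3*q := un)"
      define s4 where "s4 = s3(baseJ jj + 3*q + 1 := fst (snd e) + v m)"
      define s5 where "s5 = s4(baseJ jj + 3*q + 2 := snd (snd e) + 2^m)"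
      have m3: "mem jj s3 = (mem jj s)(q := (un, fst (snd (T q)), snd (snd (T q))))"
        unfolding s3_def mem_upd0 s2n(9) mq ..
      have m4: "mem jj s4 = (mem jj s)(q := (un, fst (snd e) + v m, snd (snd (T q))))"
        unfolding s4_def mem_upd1 m3 by simp
      have m5: "mem jj s5 = (mem jj s)(q := nt)"
        unfolding s5_def mem_upd2 m4 by (simp add: nt_def)
      have s3n: "s3 0 = real n" "s3 (vr 8) = real (baseJ jj)" "s3 (vr 3) = real q" "s3 (vr 4) = real r"
         "s3 (vr 6) = v m" "s3 (vr 2) = 2^m"
        using s2n by (simp_all add: s3_def)
      have s4n: "s4 0 = real n" "s4 (vr 8) = real (baseJ jj)" "s4 (vr 3) = real q" "s4 (vr 4) = real r"
         "s4 (vr 6) = v m" "s4 (vr 2) = 2^m"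
        using s3n by (simp_all add: s4_def)
      have s5n: "s5 0 = real n" "s5 (vr 8) = real (baseJ jj)" "s5 (vr 3) = real q"
        using s4n by (simp_all add: s5_def)
      have dqr3: "aval (Minus (rd 3) (rd 4)) s3 = real (q - r)" using s3n qk by (simp add: of_nat_diff)
      have dqr4: "aval (Minus (rd 3) (rd 4)) s4 = real (q - r)" using s4n qk by (simp add: of_nat_diff)
      have b1: "aval (rd 12) s2 = un" using s2n by simp
      have b2: "aval (Plus (R (tA 1 (Minus (rd 3) (rd 4)))) (rd 6)) s3 = fst (snd e) + v m"
      proof -
        have "aval (R (tA 1 (Minus (rd 3) (rd 4)))) s3 = s3 (baseJ jj + 3*(q-r) + 1)"
          using s3n dqr3 by (intro read_tA)
        also have "\<dots> = fst (snd e)" unfolding mem_read m3 using qr_ne mqr by (simp add: e_def)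
        finally show ?thesis using s3n by simp
      qed
      have b3: "aval (Plus (R (tA 2 (Minus (rd 3) (rd 4)))) (rd 2)) s4 = snd (snd e) + 2^m"
      proof -
        have "aval (R (tA 2 (Minus (rd 3) (rd 4)))) s4 = s4 (baseJ jj + 3*(q-r) + 2)"
          using s4n dqr4 by (intro read_tA)
        also have "\<dots> = snd (snd e)" unfolding mem_read m4 using qr_ne mqr by (simp add: e_def)
        finally show ?thesis using s4n by simp
      qed
      have rd5: "aval (R (tA 0 (rd 3))) s5 = fst nt" "aval (R (tA 1 (rd 3))) s5 = fst (snd nt)"
        "aval (R (tA 2 (rd 3))) s5 = snd (snd nt)"
      proof -
        have "aval (R (tA 0 (rd 3))) s5 = s5 (baseJ jj + 3*q + 0)" using s5n by (intro read_tA) simp_all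
        also have "\<dots> = fst (mem jj s5 q)" by (simp add: mem_def)
        also have "\<dots> = fst nt" by (simp add: m5)
        finally show "aval (R (tA 0 (rd 3))) s5 = fst nt" .
        have "aval (R (tA 1 (rd 3))) s5 = s5 (baseJ jj + 3*q + 1)" using s5n by (intro read_tA) simp_all
        also have "\<dots> = fst (snd (mem jj s5 q))" by (simp add: mem_def)
        also have "\<dots> = fst (snd nt)" by (simp add: m5)
        finally show "aval (R (tA 1 (rd 3))) s5 = fst (snd nt)" .
        have "aval (R (tA 2 (rd 3))) s5 = s5 (baseJ jj + 3*q + 2)" using s5n by (intro read_tA) simp_all
        also have "\<dots> = snd (snd (mem jj s5 q))" by (simp add: mem_def)
        also have "\<dots> = snd (snd nt)" by (simp add: m5)
        finally show "aval (R (tA 2 (rd 3))) s5 = snd (snd nt)" .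
      qed
      have rd6: "aval (R (tA 2 (rd 3))) (s5(vr 9 := eprof nt)) = snd (snd nt)"
      proof -
        have "aval (R (tA 2 (rd 3))) (s5(vr 9 := eprof nt)) = (s5(vr 9 := eprof nt)) (baseJ jj + 3*q + 2)"
          using s5n by (intro read_tA) simp_all
        also have "\<dots> = s5 (baseJ jj + 3*q + 2)" by simp
        also have "\<dots> = snd (snd (mem jj s5 q))" by (simp add: mem_def)
        also have "\<dots> = snd (snd nt)" by (simp add: m5)
        finally show ?thesis .
      qed
      have b4: "aval (Mult (Minus (R (tA 0 (rd 3))) (N 2)) (R (tA 1 (rd 3)))) s5 = eprof nt"
        using rd5 by (simp add: eprof_def)
      have s5n0: "s5 0 = real n" using s5n by simp
      have cmp: "bval (Less (rd 9) (Mult (Minus (R (tA 0 (rd 3))) (N 2)) (R (tA 1 (rd 3))))) s5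
         \<longleftrightarrow> s5 (vr 9) < eprof nt"
        by (simp only: bval.simps b4) (simp add: s5n0)
      have updk: "upd jj m (tab jj m) (k-1) = nt" using updq' by (simp add: T_def q_def)
      have s5best: "s5 (vr 9) = s (vr 9)" "s5 (vr 10) = s (vr 10)"
        using s2n by (simp_all add: s5_def s4_def s3_def s2_def s1_def)
      have feasnt: "3 - B \<le> fst nt" using c by (simp add: nt_def)
      have inp5: "inp s5" using ctx_s2_base by (simp add: s5_def s4_def s3_def)
      have zero5: "\<forall>a\<ge>baseJ (Suc jj). s5 a = 0"
      proof (intro allI impI)
        fix a assume "baseJ (Suc jj) \<le> a"
        moreover have "baseJ jj + 3*q + 2 < baseJ (Suc jj)" using qk by (simp add: baseJ_def)
        ultimately show "s5 a = 0" using zero vr_lt_baseJ[of 3 "Suc jj"] vr_lt_baseJ[of 12 "Suc jj"]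
          by (auto simp add: s5_def s4_def s3_def s2_def s1_def)
      qed
      have regs5: "s5 (vr 0) = s (vr 0)" "s5 (vr 1) = s (vr 1)" "s5 (vr 2) = s (vr 2)" "s5 (vr 4) = s (vr 4)"
       "s5 (vr 5) = s (vr 5)" "s5 (vr 6) = s (vr 6)" "s5 (vr 7) = s (vr 7)" "s5 (vr 8) = s (vr 8)"
       "s5 (vr 11) = s (vr 11)" "s5 (vr 3) = real (k - 1)"
        by (simp_all add: s5_def s4_def s3_def s2_def s1_def q_def)
      have m5': "mem jj s5 = (mem jj s)(k-1 := upd jj m (tab jj m) (k-1))"
        using m5 updq' by (simp add: q_def T_def)
      obtain TT where TT: "valid TT" "eprof nt = prof TT" "snd (snd nt) = code TT"
        using entry_valid[of jj "Suc m" q] feasnt tabS updq' by auto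
      show ?thesis
        apply (rule spec_SeqI)
        apply (rule spec_tA[where b = "baseJ jj" and q = q, OF s2n(1) s2n(2) _ b1])
         apply (simp add: s2n)
        apply (simp only: add_0_right)
        apply (fold s3_def)
        apply (rule spec_SeqI)
        apply (rule spec_tA[where b = "baseJ jj" and q = q, OF s3n(1) s3n(2) _ b2])
         apply (simp add: s3n)
        apply (fold s4_def)
        apply (rule spec_SeqI)
        apply (rule spec_tA[where b = "baseJ jj" and q = q, OF s4n(1) s4n(2) _ b3])
         apply (simp add: s4n)
        apply (fold s5_def)
        apply (rule spec_IfI)
        subgoal premises bc
          apply (rule spec_SeqI)
          apply (rule spec_vA[OF s5n(1) b4])
          apply (rule spec_vA[where x = "snd (snd nt)", OF _ rd6])
            apply (simp add: s5n)
          apply (intro conjI)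
          apply (rule I4_step[OF I rk])
          using inp5 regs5 apply (simp_all add: m5' zero5 mem_upd_vr)
          using bc cmp b4 s5best TT zero5 m5' updk apply (auto simp: bestOK_def q_def)
          done
        subgoal premises bc
          apply (rule spec_SkipI)
          apply (intro conjI)
          apply (rule I4_step[OF I rk])
          using inp5 regs5 apply (simp_all add: m5' zero5)
          using bc cmp b4 s5best TT bok updk apply (auto simp: q_def bestOK_def)
          done
        done
    qed
    subgoal premises ncnd
    proof -
      have c: "\<not> (3 - B \<le> un \<and> fst (T q) < un)" using ncnd cond_eq by auto
      have upq: "upd jj m T q = T q" using updq c by simp
      have vl: "\<not> baseJ (Suc jj) \<le> vr 3" "\<not> baseJ (Suc jj) \<le> vr 12"
        by (simp_all add: baseJ_def vr_def)
      have zero2: "\<forall>a\<ge>baseJ (Suc jj). s2 a = 0" using zero vl by (auto simp: s2_def s1_def)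
      have regs2: "s2 (vr 0) = s (vr 0)" "s2 (vr 1) = s (vr 1)" "s2 (vr 2) = s (vr 2)" "s2 (vr 4) = s (vr 4)"
       "s2 (vr 5) = s (vr 5)" "s2 (vr 6) = s (vr 6)" "s2 (vr 7) = s (vr 7)" "s2 (vr 8) = s (vr 8)"
       "s2 (vr 11) = s (vr 11)" "s2 (vr 3) = real (k - 1)" "bestOK s2" "s2 (vr 9) = s (vr 9)"
        using bok by (simp_all add: s2_def s1_def q_def)
      have e1: "upd jj m (tab jj m) (k-1) = mem jj s (k-1)" using upq mq unfolding T_def q_def by simp
      have m2: "mem jj s2 = (mem jj s)(k-1 := upd jj m (tab jj m) (k-1))"
        unfolding e1 s2n(9) by simp
      have f2: "3 - B \<le> fst (mem jj s2 (k-1)) \<longrightarrow> eprof (mem jj s2 (k-1)) \<le> s2 (vr 9)"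
      proof -
        have "k - 1 = q" by (simp add: q_def)
        then show ?thesis using feas[rule_format, of q] qk(3) s2n(9) regs2(12) by simp
      qed
      show ?thesis
        apply (rule spec_SkipI)
        apply (intro conjI)
         apply (rule I4_step[OF I rk ctx_s2_base regs2(1-10) m2 zero2 regs2(11)])
        using regs2(12) f2 by simp_all
    qed
    done
qed

lemma loop4_spec:
  assumes "I4 jj b0 m k s"
  shows "spec loop4 s (\<lambda>t s'. I4 jj b0 m (rn jj m) s' \<and> t \<le> (k + 1) * 13)"
  unfolding loop4_def
proof (rule spec_While[where I = "\<lambda>s. \<exists>k'. I4 jj b0 m k' s" and m = "\<lambda>s. reg_index (s (vr 3))" and T = 12])
  show "\<exists>k'. I4 jj b0 m k' s" using assms by blast
next
  fix s' assume "\<exists>k'. I4 jj b0 m k' s'" and b: "bval (Less (rd 4) (rd 3)) s'"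
  then obtain k' where I: "I4 jj b0 m k' s'" by blast
  then have f: "s' 0 = real n" "s' (vr 3) = real k'" "s' (vr 4) = real (rn jj m)"
    unfolding I4_def ctx_def inp_def by blast+
  then have rk: "rn jj m < k'" using b by simp
  show "spec body4 s' (\<lambda>t s''. (\<exists>k'. I4 jj b0 m k' s'') \<and> reg_index (s'' (vr 3)) < reg_index (s' (vr 3)) \<and> t \<le> 12)"
  proof (rule spec_mono[OF body4_spec[OF I rk]])
    fix t s'' assume h: "I4 jj b0 m (k' - 1) s'' \<and> t \<le> 12"
    then have "s'' (vr 3) = real (k' - 1)" unfolding I4_def by blast
    then have "reg_index (s'' (vr 3)) = k' - 1" by (simp only: reg_index_nat)
    moreover have "reg_index (s' (vr 3)) = k'" using f(2) by (simp only: reg_index_nat)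
    ultimately show "(\<exists>k'. I4 jj b0 m k' s'') \<and> reg_index (s'' (vr 3)) < reg_index (s' (vr 3)) \<and> t \<le> 12"
      using h rk by auto
  qed
next
  fix t s' assume "\<exists>k'. I4 jj b0 m k' s'" and b: "\<not> bval (Less (rd 4) (rd 3)) s'"
    and t: "t \<le> (reg_index (s (vr 3)) + 1) * (12 + 1)"
  then obtain k' where I: "I4 jj b0 m k' s'" by blast
  then have f: "s' 0 = real n" "s' (vr 3) = real k'" "s' (vr 4) = real (rn jj m)" "rn jj m \<le> k'"
    unfolding I4_def ctx_def inp_def by blast+
  then have "k' = rn jj m" using b by simp
  moreover have "s (vr 3) = real k" using assms unfolding I4_def by blast
  ultimately show "I4 jj b0 m (rn jj m) s' \<and> t \<le> (k + 1) * 13" using I t by simp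
qed

definition I3 :: "nat \<Rightarrow> real \<Rightarrow> nat \<Rightarrow> state \<Rightarrow> bool" where
  "I3 jj b0 m s \<longleftrightarrow> ctx jj b0 s \<and> m \<le> n \<and> s (vr 1) = real m \<and> s (vr 2) = 2^m
     \<and> (\<forall>q\<le>Q. mem jj s q = tab jj m q)"

lemma ctx_upd[simp]: "k < 16 \<Longrightarrow> k \<notin> {0,7,8,9,10,11} \<Longrightarrow> ctx jj b0 (s(vr k := x)) = ctx jj b0 s"
proof -
  assume k: "k < 16" "k \<notin> {0,7,8,9,10,11}"
  have z: "(\<forall>a\<ge>baseJ (Suc jj). (s(vr k := x)) a = 0) = (\<forall>a\<ge>baseJ (Suc jj). s a = 0)"
    using vr_lt_baseJ(1)[of k "Suc jj"] k by (metis fun_upd_other not_le)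
  show ?thesis unfolding ctx_def z using k by (simp add: bestOK_def)
qed

lemma aval_vIn: "aval e s = real m \<Longrightarrow> aval (vIn e) s = s (3 + 2*m)"
  unfolding vIn_def using reg_index_eq[of "3 + 2 * real m" "3+2*m"] by simp
lemma aval_cIn: "aval e s = real m \<Longrightarrow> aval (cIn e) s = s (4 + 2*m)"
  unfolding cIn_def using reg_index_eq[of "4 + 2 * real m" "4+2*m"] by simp

lemma rn_le_Q: assumes "m \<in> items jj" shows "rn jj m \<le> Q"
proof -
  have m: "m < n" "0 < v m" "v m \<le> v jj" using assms unfolding items_def by auto
  have "v m * real n / (eps * v jj) \<le> real n / eps"
    using m e0 by (simp add: field_simps mult_right_mono)
  also have "\<dots> \<le> real n * real n / eps" using m e0
    by (intro divide_right_mono) (auto simp: mult_le_cancel_left1)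
  finally show ?thesis unfolding rn_def Q_def by (intro nat_mono floor_mono)
qed

lemma rn_real: "0 \<le> v i \<Longrightarrow> 0 < v j \<Longrightarrow> real_of_int \<lfloor>v i * real n / (eps * v j)\<rfloor> = real (rn j i)"
  unfolding rn_def using e0 by simp

end

context inst begin

lemma in_ne_vr[simp]: "i < n \<Longrightarrow> vr k \<noteq> 3 + 2*i" "i < n \<Longrightarrow> vr k \<noteq> 4 + 2*i"
  "i < n \<Longrightarrow> 3 + 2*i \<noteq> vr k" "i < n \<Longrightarrow> 4 + 2*i \<noteq> vr k"
  by (simp_all add: vr_def)

lemma upd_below: "q < rn j i \<Longrightarrow> upd j i T q = T q"
  unfolding upd_def Let_def by simp

lemma ctx_n0: "ctx jj b0 s \<Longrightarrow> s 0 = real n"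
  unfolding ctx_def inp_def by blast

lemma tail3:
  assumes cx: "ctx jj b0 s" and h: "s (vr 1) = real m" "s (vr 2) = 2^m" "Suc m \<le> n"
    "\<forall>q\<le>Q. mem jj s q = tab jj (Suc m) q"
  shows "spec (Seq (Assign (vA 2) (Mult (N 2) (rd 2))) (Assign (vA 1) (Plus (rd 1) (N 1)))) s
     (\<lambda>t s'. I3 jj b0 (Suc m) s' \<and> t = 2)"
proof -
  have n0: "s 0 = real n" using ctx_n0[OF cx] .
  have h1': "s (vr (Suc 0)) = real m" using h(1) by simp
  show ?thesis
    apply (rule spec_SeqI)
    apply (rule spec_vA[where x = "2^Suc m"])
      apply (rule n0)
     apply (simp add: n0 h)
    apply (rule spec_vA[where x = "real (Suc m)"])
      apply (simp add: n0)
     apply (simp add: n0 h h1')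
    unfolding I3_def apply (intro conjI)
    using cx h by simp_all
qed

lemma body3_spec:
  assumes I: "I3 jj b0 m s" and mn: "m < n"
  shows "spec body3 s (\<lambda>t s'. I3 jj b0 (Suc m) s' \<and> t \<le> 13*Q + 45)"
proof -
  have cx: "ctx jj b0 s" and i1: "s (vr 1) = real m" and p2: "s (vr 2) = 2^m"
    and memI: "\<forall>q\<le>Q. mem jj s q = tab jj m q" using I unfolding I3_def by blast+
  have n0: "s 0 = real n" and s2e: "s 2 = eps" and vin: "s (3 + 2*m) = v m" and cin: "s (4+2*m) = c m"
    and j11: "s (vr 11) = v jj" and q7: "s (vr 7) = real Q" and vj0: "0 < v jj"
    using cx mn unfolding ctx_def inp_def by auto
  define s1 where "s1 = s(vr 6 := v m)"
  have a1: "aval (vIn (rd 1)) s = v m" using aval_vIn[of "rd 1" s m] n0 i1 vin by simp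
  have s1f: "s1 0 = real n" "s1 (vr 6) = v m" "s1 (vr 11) = v jj" "ctx jj b0 s1" "s1 (vr 1) = real m"
    "s1 (vr 2) = 2^m" "mem jj s1 = mem jj s" "s1 (4 + 2*m) = c m" "s1 2 = eps" "s1 (vr 7) = real Q"
    using n0 j11 cx i1 p2 cin s2e q7 mn by (simp_all add: s1_def)
  have cond: "bval (And (Less (N 0) (rd 6)) (geq (rd 11) (rd 6))) s1 \<longleftrightarrow> m \<in> items jj"
    using s1f mn by (auto simp: geq_def items_def)
  show ?thesis unfolding body3_def
    apply (rule spec_SeqI)
    apply (rule spec_vA[OF n0 a1])
    apply (fold s1_def)
    apply (rule spec_SeqI)
    apply (rule spec_IfI)
    subgoal premises bc
    proof -
      have mi: "m \<in> items jj" using bc cond by blast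
      have vm0: "0 < v m" using mi unfolding items_def by simp
      define s4 where "s4 = s1(vr 5 := c m / v m, vr 4 := real (rn jj m), vr 3 := real (Q + 1))"
      have a2: "aval (Divide (cIn (rd 1)) (rd 6)) s1 = c m / v m"
        using aval_cIn[of "rd 1" s1 m] s1f by simp
      have a3: "aval (Floor (Divide (Mult (rd 6) (R (N 0))) (Mult (R (N 2)) (rd 11)))) (s1(vr 5 := c m / v m))
          = real (rn jj m)"
        using s1f rn_real[of m jj] vm0 vj0 by simp
      have a4: "aval (Plus (rd 7) (N 1)) (s1(vr 5 := c m / v m, vr 4 := real (rn jj m))) = real (Q+1)"
        using s1f by simp
      have I4s: "I4 jj b0 m (Q+1) s4"
        unfolding I4_def s4_def using s1f mn mi rn_le_Q[OF mi] memI by simp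
      show ?thesis
        apply (rule spec_SeqI)
        apply (rule spec_vA[OF s1f(1) a2])
        apply (rule spec_SeqI)
        apply (rule spec_vA[OF _ a3])
         apply (simp add: s1f)
        apply (rule spec_SeqI)
        apply (rule spec_vA[OF _ a4])
         apply (simp add: s1f)
        apply (fold s4_def)
        apply (rule spec_mono[OF loop4_spec[OF I4s]])
        subgoal for t s5
        proof -
          assume h: "I4 jj b0 m (rn jj m) s5 \<and> t \<le> (Q + 1 + 1) * 13"
          then have c5: "ctx jj b0 s5" "s5 (vr 1) = real m" "s5 (vr 2) = 2^m"
            and m5: "\<forall>q\<le>Q. mem jj s5 q = (if rn jj m \<le> q then upd jj m (tab jj m) q else tab jj m q)"
            unfolding I4_def by blast+
          have m5': "\<forall>q\<le>Q. mem jj s5 q = tab jj (Suc m) q"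
            using m5 mi by (auto simp: upd_below)
          show ?thesis
            apply (rule spec_mono[OF tail3[OF c5 _ m5']])
            using mn h by auto
        qed
        done
    qed
    subgoal premises bc
    proof -
      have mi: "m \<notin> items jj" using bc cond by blast
      have m1: "\<forall>q\<le>Q. mem jj s1 q = tab jj (Suc m) q" using memI mi s1f(7) by simp
      show ?thesis
        apply (rule spec_SkipI)
        apply (rule spec_mono[OF tail3[OF s1f(4) s1f(5) s1f(6) _ m1]])
        using mn by auto
    qed
    done
qed

end

context inst begin

lemma vr_ne_baseJ[simp]: "k < 16 \<Longrightarrow> vr k \<noteq> baseJ j" "k < 16 \<Longrightarrow> baseJ j \<noteq> vr k"
  by (simp_all add: baseJ_def vr_def)
lemma bestOK_upd_base[simp]: "bestOK (s(baseJ j := y)) = bestOK s"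
  unfolding bestOK_def by simp

lemma dl_rn_le: assumes "i \<in> items jj" shows "dl jj * real (rn jj i) \<le> v i"
proof -
  have i: "i < n" "0 < v i" "v i \<le> v jj" using assms unfolding items_def by auto
  have n0: "0 < real n" using i by simp
  define x where "x = v i * real n / (eps * v jj)"
  have x0: "0 \<le> x" using i e0 unfolding x_def by simp
  have "real (rn jj i) \<le> x" unfolding rn_def x_def[symmetric] using of_nat_floor[OF x0] by simp
  moreover have "0 \<le> dl jj" unfolding dl_def using e0 i by simp
  ultimately have "dl jj * real (rn jj i) \<le> dl jj * x" by (simp add: mult_left_mono)
  also have "dl jj * x = v i" unfolding dl_def x_def using n0 e0 i by (simp add: field_simps)
  finally show ?thesis .
qed

lemma rn_le0: assumes "i \<in> items jj" shows "rn jj i \<le> nat \<lfloor>real n / eps\<rfloor>"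
proof -
  have m: "i < n" "0 < v i" "v i \<le> v jj" using assms unfolding items_def by auto
  have "v i * real n / (eps * v jj) \<le> real n / eps"
    using m e0 by (simp add: field_simps mult_right_mono)
  then show ?thesis unfolding rn_def by (intro nat_mono floor_mono)
qed

lemma sum_rn_le: assumes "S \<subseteq> items jj" shows "sum (rn jj) S \<le> Q"
proof -
  define R0 where "R0 = nat \<lfloor>real n / eps\<rfloor>"
  have fS: "finite S" using assms finite_items finite_subset by blast
  have "sum (rn jj) S \<le> sum (\<lambda>_. R0) S" using assms rn_le0 unfolding R0_def by (intro sum_mono) auto
  also have "\<dots> = card S * R0" by simp
  also have "\<dots> \<le> n * R0"
  proof -
    have "S \<subseteq> {..<n}" using assms unfolding items_def by auto
    then have "card S \<le> n" using card_mono[of "{..<n}" S] by simp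
    then show ?thesis by simp
  qed
  also have "n * R0 \<le> Q" unfolding Q_def
  proof (rule le_nat_floor)
    have "real R0 \<le> real n / eps" unfolding R0_def using e0 by (intro of_nat_floor) simp
    then have "real n * real R0 \<le> real n * (real n / eps)" by (intro mult_left_mono) auto
    then show "real (n * R0) \<le> real n * real n / eps" by simp
  qed
  finally show ?thesis .
qed

lemma entry_lb:
  assumes vj: "0 < v jj" and S: "S \<subseteq> items jj" and WS: "W S \<le> B"
  shows "3 - B \<le> fst (tab jj n (sum (rn jj) S))"
    and "(1 - W S) * dl jj * real (sum (rn jj) S) \<le> eprof (tab jj n (sum (rn jj) S))"
proof -
  have S': "S \<subseteq> items jj \<inter> {..<n}" using S unfolding items_def by auto
  have c: "3 - W S \<le> fst (tab jj n (sum (rn jj) S))" by (rule tab_complete[OF S' WS])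
  then show f: "3 - B \<le> fst (tab jj n (sum (rn jj) S))" using WS by linarith
  from tab_sound[OF f] obtain T where T: "T \<subseteq> items jj \<inter> {..<n}"
    "tab jj n (sum (rn jj) S) = (3 - W T, Vs T, code T)" "sum (rn jj) T = sum (rn jj) S" by blast
  have fT: "finite T" using T(1) finite_items finite_subset by blast
  have WT: "W T \<le> W S" using c T(2) by simp
  have "dl jj * real (sum (rn jj) T) = (\<Sum>i\<in>T. dl jj * real (rn jj i))" by (simp add: sum_distrib_left)
  also have "\<dots> \<le> Vs T" unfolding Vs_def using T(1) dl_rn_le by (intro sum_mono) auto
  finally have VT: "dl jj * real (sum (rn jj) S) \<le> Vs T" using T(3) by simp
  have dl0: "0 \<le> dl jj" unfolding dl_def using e0 vj by simp
  have "(1 - W S) * (dl jj * real (sum (rn jj) S)) \<le> (1 - W T) * Vs T"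
    using WT WS B1 VT dl0 by (intro mult_mono) (auto simp del: of_nat_sum)
  then show "(1 - W S) * dl jj * real (sum (rn jj) S) \<le> eprof (tab jj n (sum (rn jj) S))"
    using T(2) by (simp add: eprof_def mult.assoc)
qed

lemma loop3_spec:
  assumes "I3 jj b0 0 s"
  shows "spec loop3 s (\<lambda>t s'. I3 jj b0 n s' \<and> t \<le> (n + 1) * (13*Q + 46))"
  unfolding loop3_def
proof (rule spec_While[where I = "\<lambda>s. \<exists>m. I3 jj b0 m s" and m = "\<lambda>s. n - reg_index (s (vr 1))" and T = "13*Q+45"])
  show "\<exists>m. I3 jj b0 m s" using assms by blast
next
  fix s' assume "\<exists>m. I3 jj b0 m s'" and b: "bval (Less (rd 1) (R (N 0))) s'"
  then obtain m where I: "I3 jj b0 m s'" by blast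
  then have f: "s' 0 = real n" "s' (vr 1) = real m"
    unfolding I3_def ctx_def inp_def by blast+
  then have mn: "m < n" using b by simp
  show "spec body3 s' (\<lambda>t s''. (\<exists>m. I3 jj b0 m s'') \<and> n - reg_index (s'' (vr 1)) < n - reg_index (s' (vr 1)) \<and> t \<le> 13*Q+45)"
  proof (rule spec_mono[OF body3_spec[OF I mn]])
    fix t s'' assume h: "I3 jj b0 (Suc m) s'' \<and> t \<le> 13*Q+45"
    then have "s'' (vr 1) = real (Suc m)" unfolding I3_def by blast
    then have "reg_index (s'' (vr 1)) = Suc m" by (simp only: reg_index_nat)
    moreover have "reg_index (s' (vr 1)) = m" using f(2) by (simp only: reg_index_nat)
    ultimately show "(\<exists>m. I3 jj b0 m s'') \<and> n - reg_index (s'' (vr 1)) < n - reg_index (s' (vr 1)) \<and> t \<le> 13*Q+45"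
      using h mn by auto
  qed
next
  fix t s' assume "\<exists>m. I3 jj b0 m s'" and b: "\<not> bval (Less (rd 1) (R (N 0))) s'"
    and t: "t \<le> (n - reg_index (s (vr 1)) + 1) * (13*Q+45 + 1)"
  then obtain m where I: "I3 jj b0 m s'" by blast
  then have f: "s' 0 = real n" "s' (vr 1) = real m" "m \<le> n"
    unfolding I3_def ctx_def inp_def by blast+
  then have "m = n" using b by simp
  moreover have "(n - reg_index (s (vr 1)) + 1) * (13*Q+45 + 1) \<le> (n + 1) * (13*Q + 46)"
    by (intro mult_mono) auto
  ultimately show "I3 jj b0 n s' \<and> t \<le> (n + 1) * (13*Q + 46)" using I t by simp
qed

definition I1 :: "nat \<Rightarrow> state \<Rightarrow> bool" where
  "I1 jj s \<longleftrightarrow> inp s \<and> jj \<le> n \<and> s (vr 0) = real jj \<and> s (vr 7) = real Q \<and> bestOK s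
    \<and> (\<forall>j'<jj. 0 < v j' \<longrightarrow> (\<forall>S\<subseteq>items j'. W S \<le> B \<longrightarrow>
          (1 - W S) * dl j' * real (sum (rn j') S) \<le> s (vr 9)))
    \<and> (\<forall>a\<ge>baseJ jj. s a = 0)"

lemma tail1:
  assumes h: "inp s" "jj < n" "s (vr 0) = real jj" "s (vr 7) = real Q" "bestOK s"
    "\<forall>j'<Suc jj. 0 < v j' \<longrightarrow> (\<forall>S\<subseteq>items j'. W S \<le> B \<longrightarrow>
          (1 - W S) * dl j' * real (sum (rn j') S) \<le> s (vr 9))"
    "\<forall>a\<ge>baseJ (Suc jj). s a = 0"
  shows "spec (Assign (vA 0) (Plus (rd 0) (N 1))) s (\<lambda>t s'. I1 (Suc jj) s' \<and> t = 1)"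
proof -
  have n0: "s 0 = real n" using h(1) unfolding inp_def by blast
  have z: "\<forall>a\<ge>baseJ (Suc jj). (s(vr 0 := real (Suc jj))) a = 0"
    using h(7) by (auto simp: vr_lt_baseJ(2))
  show ?thesis
    apply (rule spec_vA[where x = "real (Suc jj)"])
      apply (rule n0)
     apply (simp add: n0 h)
    unfolding I1_def using h z by (simp add: bestOK_def)
qed

lemma body1_spec:
  assumes I: "I1 jj s" and jn: "jj < n"
  shows "spec body1 s (\<lambda>t s'. I1 (Suc jj) s' \<and> t \<le> (n+1)*(13*Q+46) + 10)"
proof -
  have inps: "inp s" and j0: "s (vr 0) = real jj" and q7: "s (vr 7) = real Q" and bok: "bestOK s"
    and prev: "\<forall>j'<jj. 0 < v j' \<longrightarrow> (\<forall>S\<subseteq>items j'. W S \<le> B \<longrightarrow>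
          (1 - W S) * dl j' * real (sum (rn j') S) \<le> s (vr 9))"
    and zero: "\<forall>a\<ge>baseJ jj. s a = 0"
    using I unfolding I1_def by blast+
  have n0: "s 0 = real n" and vjin: "s (3 + 2*jj) = v jj" using inps jn unfolding inp_def by auto
  define s1 where "s1 = s(vr 11 := v jj)"
  have a1: "aval (vIn (rd 0)) s = v jj" using aval_vIn[of "rd 0" s jj] n0 j0 vjin by simp
  have s1f: "s1 0 = real n" "s1 (vr 11) = v jj" "s1 (vr 0) = real jj" "s1 (vr 7) = real Q" "inp s1"
    "bestOK s1" "s1 (vr 9) = s (vr 9)"
    using n0 j0 q7 inps bok by (simp_all add: s1_def)
  have z1: "\<forall>a\<ge>baseJ jj. s1 a = 0"
    using zero unfolding s1_def by (auto simp: vr_lt_baseJ(2))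
  have bj: "baseJ jj < baseJ (Suc jj)" by (simp add: baseJ_def)
  show ?thesis unfolding body1_def
    apply (rule spec_SeqI)
    apply (rule spec_vA[OF n0 a1])
    apply (fold s1_def)
    apply (rule spec_SeqI)
    apply (rule spec_IfI)
    subgoal premises bc
    proof -
      have vj: "0 < v jj" using bc s1f by simp
      have a2: "aval (Plus (vA 16) (Mult (Mult (N 3) (Plus (rd 7) (N 1))) (rd 0))) s1 = real (baseJ jj)"
        using s1f by (simp add: baseJ_def algebra_simps)
      define s2 where "s2 = s1(vr 8 := real (baseJ jj))"
      have s2f: "s2 0 = real n" "s2 (vr 8) = real (baseJ jj)" using s1f by (simp_all add: s2_def)
      define s5 where "s5 = s2(baseJ jj := 3, vr 1 := 0, vr 2 := 1)"
      have mz: "\<forall>q. mem jj s2 q = (0,0,0)"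
      proof
        fix q
        have "\<forall>a\<ge>baseJ jj. s2 a = 0" using z1 by (simp add: s2_def)
        then show "mem jj s2 q = (0,0,0)" unfolding mem_def by simp
      qed
      have m2: "mem jj (s2(baseJ jj := 3)) = (mem jj s2)(0 := (3, fst (snd (mem jj s2 0)), snd (snd (mem jj s2 0))))"
        using mem_upd0[of jj s2 0 3] by simp
      have m5: "mem jj s5 = mem jj (s2(baseJ jj := 3))" unfolding s5_def by simp
      have mem5: "\<forall>q. mem jj s5 q = tab jj 0 q"
        unfolding m5 m2 using mz by simp
      have b5: "s5 (vr 9) = s (vr 9)" using s1f(7) by (simp add: s5_def s2_def)
      have feas5: "\<forall>q\<le>Q. 3 - B \<le> fst (mem jj s5 q) \<longrightarrow> eprof (mem jj s5 q) \<le> s5 (vr 9)"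
      proof (intro allI impI)
        fix q assume "q \<le> Q" "3 - B \<le> fst (mem jj s5 q)"
        then have "q = 0" using mem5 B1 by (auto split: if_splits)
        then show "eprof (mem jj s5 q) \<le> s5 (vr 9)"
          using mem5 b5 bestOK_nonneg[OF bok] by (simp add: eprof_def)
      qed
      have z5: "\<forall>a\<ge>baseJ (Suc jj). s5 a = 0"
      proof (intro allI impI)
        fix a assume a: "baseJ (Suc jj) \<le> a"
        then have a1: "a \<noteq> baseJ jj" "baseJ jj \<le> a" using bj by auto
        have a2: "a \<noteq> vr 1" "a \<noteq> vr 2" "a \<noteq> vr 8"
          using a vr_lt_baseJ(1)[of 1 "Suc jj"] vr_lt_baseJ(1)[of 2 "Suc jj"] vr_lt_baseJ(1)[of 8 "Suc jj"]
          by auto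
        show "s5 a = 0" using a1 a2 z1 by (simp add: s5_def s2_def)
      qed
      have s5f: "inp s5" "s5 (vr 0) = real jj" "s5 (vr 7) = real Q" "s5 (vr 11) = v jj"
        "s5 (vr 8) = real (baseJ jj)" "bestOK s5" "s5 (vr 1) = real 0" "s5 (vr 2) = 2^0"
        using s1f by (simp_all add: s5_def s2_def)
      have I3s: "I3 jj (s (vr 9)) 0 s5"
        unfolding I3_def ctx_def using s5f jn vj mem5 feas5 z5 b5 by simp
      show ?thesis
        apply (rule spec_SeqI)
        apply (rule spec_vA[OF s1f(1) a2])
        apply (fold s2_def)
        apply (rule spec_SeqI)
        apply (rule spec_tA[where b = "baseJ jj" and q = 0 and y = 3, OF s2f])
          apply simp
         apply simp
        apply (simp only: mult_0_right add_0_right)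
        apply (rule spec_SeqI)
        apply (rule spec_vA[where x = 0])
          apply (simp add: s2f)
         apply simp
        apply (rule spec_SeqI)
        apply (rule spec_vA[where x = 1])
          apply (simp add: s2f)
         apply simp
        apply (fold s5_def)
        apply (rule spec_mono[OF loop3_spec[OF I3s]])
        subgoal for t s6
        proof -
          assume h: "I3 jj (s (vr 9)) n s6 \<and> t \<le> (n + 1) * (13 * Q + 46)"
          then have cx: "ctx jj (s (vr 9)) s6" and m6: "\<forall>q\<le>Q. mem jj s6 q = tab jj n q"
            unfolding I3_def by blast+
          have c6: "inp s6" "s6 (vr 0) = real jj" "s6 (vr 7) = real Q" "bestOK s6" "s (vr 9) \<le> s6 (vr 9)"
            "\<forall>q\<le>Q. 3 - B \<le> fst (mem jj s6 q) \<longrightarrow> eprof (mem jj s6 q) \<le> s6 (vr 9)"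
            "\<forall>a\<ge>baseJ (Suc jj). s6 a = 0"
            using cx unfolding ctx_def by blast+
          have newf: "\<forall>j'<Suc jj. 0 < v j' \<longrightarrow> (\<forall>S\<subseteq>items j'. W S \<le> B \<longrightarrow>
              (1 - W S) * dl j' * real (sum (rn j') S) \<le> s6 (vr 9))"
          proof (intro allI impI)
            fix j' S assume j': "j' < Suc jj" "0 < v j'" and S: "S \<subseteq> items j'" "W S \<le> B"
            show "(1 - W S) * dl j' * real (sum (rn j') S) \<le> s6 (vr 9)"
            proof (cases "j' = jj")
              case True
              have qQ: "sum (rn jj) S \<le> Q" using sum_rn_le S True by simp
              have e1: "3 - B \<le> fst (tab jj n (sum (rn jj) S))"
                and e2: "(1 - W S) * dl jj * real (sum (rn jj) S) \<le> eprof (tab jj n (sum (rn jj) S))"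
                using entry_lb[OF vj] S True by auto
              have m: "mem jj s6 (sum (rn jj) S) = tab jj n (sum (rn jj) S)" using m6 qQ by blast
              have "eprof (mem jj s6 (sum (rn jj) S)) \<le> s6 (vr 9)"
                using c6(6)[rule_format, OF qQ] e1 m by simp
              then have "eprof (tab jj n (sum (rn jj) S)) \<le> s6 (vr 9)" using m by simp
              then have "(1 - W S) * dl jj * real (sum (rn jj) S) \<le> s6 (vr 9)"
                using e2 by linarith
              then show ?thesis using True by simp
            next
              case False
              then have "j' < jj" using j' by simp
              then have "(1 - W S) * dl j' * real (sum (rn j') S) \<le> s (vr 9)"
                using prev j'(2) S by blast
              then show ?thesis using c6(5) by linarith
            qed
          qed
          show ?thesis
            apply (rule spec_mono[OF tail1[OF c6(1) jn c6(2) c6(3) c6(4) newf c6(7)]])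
            using h by auto
        qed
        done
    qed
    subgoal premises bc
    proof -
      have vj: "\<not> 0 < v jj" using bc s1f by simp
      have newf: "\<forall>j'<Suc jj. 0 < v j' \<longrightarrow> (\<forall>S\<subseteq>items j'. W S \<le> B \<longrightarrow>
              (1 - W S) * dl j' * real (sum (rn j') S) \<le> s1 (vr 9))"
      proof (intro allI impI)
        fix j' S assume j': "j' < Suc jj" "0 < v j'" and S: "S \<subseteq> items j'" "W S \<le> B"
        then have "j' < jj" using vj less_Suc_eq by auto
        then have "(1 - W S) * dl j' * real (sum (rn j') S) \<le> s (vr 9)"
          using prev j'(2) S by blast
        then show "(1 - W S) * dl j' * real (sum (rn j') S) \<le> s1 (vr 9)" using s1f(7) by simp
      qed
      have z: "\<forall>a\<ge>baseJ (Suc jj). s1 a = 0"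
      proof (intro allI impI)
        fix a assume "baseJ (Suc jj) \<le> a"
        then have "baseJ jj \<le> a" using bj by linarith
        then show "s1 a = 0" using z1 by blast
      qed
      show ?thesis
        apply (rule spec_SkipI)
        apply (rule spec_mono[OF tail1[OF s1f(5) jn s1f(3) s1f(4) s1f(6) newf z]])
        by auto
    qed
    done
qed

lemma loop1_spec:
  assumes "I1 0 s"
  shows "spec loop1 s (\<lambda>t s'. I1 n s' \<and> t \<le> (n + 1) * ((n+1)*(13*Q+46) + 11))"
  unfolding loop1_def
proof (rule spec_While[where I = "\<lambda>s. \<exists>j. I1 j s" and m = "\<lambda>s. n - reg_index (s (vr 0))" and T = "(n+1)*(13*Q+46) + 10"])
  show "\<exists>j. I1 j s" using assms by blast
next
  fix s' assume "\<exists>j. I1 j s'" and b: "bval (Less (rd 0) (R (N 0))) s'"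
  then obtain j where I: "I1 j s'" by blast
  then have f: "s' 0 = real n" "s' (vr 0) = real j"
    unfolding I1_def inp_def by blast+
  then have mn: "j < n" using b by simp
  show "spec body1 s' (\<lambda>t s''. (\<exists>j. I1 j s'') \<and> n - reg_index (s'' (vr 0)) < n - reg_index (s' (vr 0)) \<and> t \<le> (n+1)*(13*Q+46) + 10)"
  proof (rule spec_mono[OF body1_spec[OF I mn]])
    fix t s'' assume h: "I1 (Suc j) s'' \<and> t \<le> (n+1)*(13*Q+46) + 10"
    then have "s'' (vr 0) = real (Suc j)" unfolding I1_def by blast
    then have "reg_index (s'' (vr 0)) = Suc j" by (simp only: reg_index_nat)
    moreover have "reg_index (s' (vr 0)) = j" using f(2) by (simp only: reg_index_nat)
    ultimately show "(\<exists>j. I1 j s'') \<and> n - reg_index (s'' (vr 0)) < n - reg_index (s' (vr 0)) \<and> t \<le> (n+1)*(13*Q+46) + 10"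
      using h mn by auto
  qed
next
  fix t s' assume "\<exists>j. I1 j s'" and b: "\<not> bval (Less (rd 0) (R (N 0))) s'"
    and t: "t \<le> (n - reg_index (s (vr 0)) + 1) * ((n+1)*(13*Q+46) + 10 + 1)"
  then obtain j where I: "I1 j s'" by blast
  then have f: "s' 0 = real n" "s' (vr 0) = real j" "j \<le> n"
    unfolding I1_def inp_def by blast+
  then have "j = n" using b by simp
  moreover have "(n - reg_index (s (vr 0)) + 1) * ((n+1)*(13*Q+46) + 10 + 1) \<le> (n + 1) * ((n+1)*(13*Q+46) + 11)"
    by (intro mult_mono) auto
  ultimately show "I1 n s' \<and> t \<le> (n + 1) * ((n+1)*(13*Q+46) + 11)" using I order_trans[OF t] by simp
qed

end

lemma sum_pow_lt: "T \<subseteq> {..<m} \<Longrightarrow> (\<Sum>i\<in>T. (2::nat)^i) < 2^m"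
proof (induction m arbitrary: T)
  case 0 then show ?case by simp
next
  case (Suc m)
  have fT: "finite T" using Suc.prems finite_subset by blast
  have sub: "T - {m} \<subseteq> {..<m}" using Suc.prems by (auto simp: less_Suc_eq)
  have "(\<Sum>i\<in>T. (2::nat)^i) \<le> (\<Sum>i\<in>insert m (T - {m}). 2^i)"
    using fT by (intro sum_mono2) auto
  also have "\<dots> = 2^m + (\<Sum>i\<in>T - {m}. 2^i)" using fT by (subst sum.insert) auto
  also have "\<dots> < 2^m + 2^m" using Suc.IH[OF sub] by simp
  finally show ?case by simp
qed

lemma odd_sum_pow:
  assumes fT: "finite T"
  shows "odd ((\<Sum>i\<in>T. (2::nat)^i) div 2^m) \<longleftrightarrow> m \<in> T"
proof -
  define A where "A = (\<Sum>i\<in>{i\<in>T. i < m}. (2::nat)^i)"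
  define b where "b = (if m \<in> T then 1 else (0::nat))"
  define K where "K = (\<Sum>i\<in>{i\<in>T. m < i}. (2::nat)^(i - Suc m))"
  have split: "T = {i\<in>T. i < m} \<union> ({i\<in>T. i = m} \<union> {i\<in>T. m < i})" by auto
  have s1: "(\<Sum>i\<in>T. (2::nat)^i) = A + ((\<Sum>i\<in>{i\<in>T. i = m}. 2^i) + (\<Sum>i\<in>{i\<in>T. m < i}. 2^i))"
    unfolding A_def using fT
    by (subst split, subst sum.union_disjoint, auto, subst sum.union_disjoint, auto)
  have s2: "(\<Sum>i\<in>{i\<in>T. i = m}. (2::nat)^i) = b * 2^m"
  proof (cases "m \<in> T")
    case True then have "{i\<in>T. i = m} = {m}" by auto
    then show ?thesis using True by (simp add: b_def)
  next
    case False then have "{i\<in>T. i = m} = {}" by auto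
    then show ?thesis using False by (simp add: b_def)
  qed
  have s3: "(\<Sum>i\<in>{i\<in>T. m < i}. (2::nat)^i) = 2^m * (2 * K)"
  proof -
    have "(\<Sum>i\<in>{i\<in>T. m < i}. (2::nat)^i) = (\<Sum>i\<in>{i\<in>T. m < i}. 2^m * (2 * 2^(i - Suc m)))"
    proof (rule sum.cong)
      fix i assume "i \<in> {i\<in>T. m < i}"
      then have "i = m + Suc (i - Suc m)" by auto
      then have "(2::nat)^i = 2^m * 2^(Suc (i - Suc m))" by (metis power_add)
      then show "(2::nat)^i = 2^m * (2 * 2^(i - Suc m))" by simp
    qed simp
    then show ?thesis unfolding K_def by (simp add: sum_distrib_left)
  qed
  have Alt: "A < 2^m" unfolding A_def by (rule sum_pow_lt) auto
  have "(\<Sum>i\<in>T. (2::nat)^i) = A + 2^m * (b + 2 * K)"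
    using s1 s2 s3 by (simp add: algebra_simps)
  then have "(\<Sum>i\<in>T. (2::nat)^i) div 2^m = b + 2 * K" using Alt by simp
  then show ?thesis by (simp add: b_def)
qed

context inst begin

definition I6 :: "nat set \<Rightarrow> real \<Rightarrow> nat \<Rightarrow> state \<Rightarrow> bool" where
  "I6 T b m s \<longleftrightarrow> inp s \<and> m \<le> n \<and> s (vr 1) = real m \<and> s (vr 2) = 2^m \<and> s (vr 10) = code T
     \<and> s (vr 9) = b \<and> (\<forall>i<m. s (3 + 2*n + i) \<noteq> 0 \<longleftrightarrow> i \<in> T)"

lemma code_nat: "code T = real (\<Sum>i\<in>T. (2::nat)^i)"
  unfolding code_def by simp

lemma decode_val:
  assumes "finite T"
  shows "(real_of_int \<lfloor>code T / 2^m\<rfloor> - 2 * real_of_int \<lfloor>code T / (2 * 2^m)\<rfloor> \<noteq> 0) \<longleftrightarrow> m \<in> T"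
proof -
  define X where "X = (\<Sum>i\<in>T. (2::nat)^i)"
  have f1: "\<lfloor>code T / 2^m\<rfloor> = int (X div 2^m)"
    unfolding code_nat X_def[symmetric] using floor_divide_of_nat_eq[of X "2^m"] by simp
  have f2: "\<lfloor>code T / (2 * 2^m)\<rfloor> = int (X div 2^m div 2)"
  proof -
    have "X div (2 * 2^m) = X div 2^m div 2" by (metis div_mult2_eq mult.commute)
    then show ?thesis
      unfolding code_nat X_def[symmetric] using floor_divide_of_nat_eq[where 'a=real, of X "2 * 2^m"]
      by simp
  qed
  define d where "d = X div 2^m"
  have "real_of_int \<lfloor>code T / 2^m\<rfloor> - 2 * real_of_int \<lfloor>code T / (2 * 2^m)\<rfloor> = real (d mod 2)"
    unfolding f1 f2 d_def[symmetric]
    using div_mult_mod_eq[of d 2] by (metis add_diff_cancel_left' of_nat_add of_nat_mult of_int_of_nat_eq mult.commute of_nat_numeral)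
  moreover have "d mod 2 \<noteq> 0 \<longleftrightarrow> m \<in> T" using odd_sum_pow[OF assms, of m] unfolding d_def X_def
    by (simp add: odd_iff_mod_2_eq_one)
  ultimately show ?thesis by simp
qed

lemma out_ne_vr[simp]: "i < n \<Longrightarrow> vr k \<noteq> 3 + 2*n + i" "i < n \<Longrightarrow> 3 + 2*n + i \<noteq> vr k"
  by (simp_all add: vr_def)

lemma body6_spec:
  assumes I: "I6 T b m s" and mn: "m < n" and fT: "finite T"
  shows "spec body6 s (\<lambda>t s'. I6 T b (Suc m) s' \<and> t \<le> 3)"
proof -
  have inps: "inp s" and i1: "s (vr 1) = real m" and p2: "s (vr 2) = 2^m" and c10: "s (vr 10) = code T"
    and b9: "s (vr 9) = b" and outs: "\<forall>i<m. s (3 + 2*n + i) \<noteq> 0 \<longleftrightarrow> i \<in> T"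
    using I unfolding I6_def by blast+
  have n0: "s 0 = real n" using inps unfolding inp_def by blast
  define y where "y = real_of_int \<lfloor>code T / 2^m\<rfloor> - 2 * real_of_int \<lfloor>code T / (2 * 2^m)\<rfloor>"
  have ao: "reg_index (aval outA s) = 3 + 2*n + m"
    unfolding outA_def using n0 i1 reg_index_eq[of "3 + 2 * real n + real m" "3 + 2*n + m"] by simp
  have ay: "aval (Minus (Floor (Divide (rd 10) (rd 2))) (Mult (N 2) (Floor (Divide (rd 10) (Mult (N 2) (rd 2)))))) s = y"
    using n0 c10 p2 by (simp add: y_def)
  define s1 where "s1 = s(3 + 2*n + m := y)"
  have s1f: "s1 0 = real n" "s1 (vr 1) = real m" "s1 (vr 2) = 2^m" "inp s1" "s1 (vr (Suc 0)) = real m"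
    using n0 i1 p2 inps mn by (simp_all add: s1_def)
  have dv: "y \<noteq> 0 \<longleftrightarrow> m \<in> T" using decode_val[OF fT, of m] unfolding y_def .
  have final: "I6 T b (Suc m) (s1(vr 2 := 2^Suc m, vr 1 := real (Suc m)))"
    unfolding I6_def
  proof (intro conjI)
    show "inp (s1(vr 2 := 2^Suc m, vr 1 := real (Suc m)))" using s1f(4) by simp
    show "\<forall>i<Suc m. ((s1(vr 2 := 2^Suc m, vr 1 := real (Suc m))) (3 + 2*n + i) \<noteq> 0) = (i \<in> T)"
    proof (intro allI impI)
      fix i assume i: "i < Suc m"
      then have "(s1(vr 2 := 2^Suc m, vr 1 := real (Suc m))) (3 + 2*n + i) = s1 (3 + 2*n + i)"
        using mn by simp
      moreover have "s1 (3 + 2*n + i) = (if i = m then y else s (3 + 2*n + i))"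
        by (simp add: s1_def)
      ultimately show "((s1(vr 2 := 2^Suc m, vr 1 := real (Suc m))) (3 + 2*n + i) \<noteq> 0) = (i \<in> T)"
        using outs dv i by (auto simp: less_Suc_eq)
    qed
  qed (use mn c10 b9 in \<open>simp_all add: s1_def\<close>)
  show ?thesis unfolding body6_def
    apply (rule spec_SeqI)
    apply (rule spec_AssignI[OF ao ay])
    apply (fold s1_def)
    apply (rule spec_SeqI)
    apply (rule spec_vA[where x = "2^Suc m"])
      apply (rule s1f(1))
     apply (simp add: s1f)
    apply (rule spec_vA[where x = "real (Suc m)"])
      apply (simp add: s1f)
     apply (simp add: s1f)
    using final by simp
qed

lemma loop6_spec:
  assumes "I6 T b 0 s" "finite T"
  shows "spec loop6 s (\<lambda>t s'. I6 T b n s' \<and> t \<le> (n + 1) * 4)"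
  unfolding loop6_def
proof (rule spec_While[where I = "\<lambda>s. \<exists>m. I6 T b m s" and m = "\<lambda>s. n - reg_index (s (vr 1))" and T = 3])
  show "\<exists>m. I6 T b m s" using assms by blast
next
  fix s' assume "\<exists>m. I6 T b m s'" and bb: "bval (Less (rd 1) (R (N 0))) s'"
  then obtain m where I: "I6 T b m s'" by blast
  then have f: "s' 0 = real n" "s' (vr 1) = real m"
    unfolding I6_def inp_def by blast+
  then have mn: "m < n" using bb by simp
  show "spec body6 s' (\<lambda>t s''. (\<exists>m. I6 T b m s'') \<and> n - reg_index (s'' (vr 1)) < n - reg_index (s' (vr 1)) \<and> t \<le> 3)"
  proof (rule spec_mono[OF body6_spec[OF I mn assms(2)]])
    fix t s'' assume h: "I6 T b (Suc m) s'' \<and> t \<le> 3"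
    then have "s'' (vr 1) = real (Suc m)" unfolding I6_def by blast
    then have "reg_index (s'' (vr 1)) = Suc m" by (simp only: reg_index_nat)
    moreover have "reg_index (s' (vr 1)) = m" using f(2) by (simp only: reg_index_nat)
    ultimately show "(\<exists>m. I6 T b m s'') \<and> n - reg_index (s'' (vr 1)) < n - reg_index (s' (vr 1)) \<and> t \<le> 3"
      using h mn by auto
  qed
next
  fix t s' assume "\<exists>m. I6 T b m s'" and bb: "\<not> bval (Less (rd 1) (R (N 0))) s'"
    and t: "t \<le> (n - reg_index (s (vr 1)) + 1) * (3 + 1)"
  then obtain m where I: "I6 T b m s'" by blast
  then have f: "s' 0 = real n" "s' (vr 1) = real m" "m \<le> n"
    unfolding I6_def inp_def by blast+
  then have "m = n" using bb by simp
  moreover have "(n - reg_index (s (vr 1)) + 1) * (3 + 1) \<le> (n + 1) * 4" by simp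
  ultimately show "I6 T b n s' \<and> t \<le> (n + 1) * 4" using I order_trans[OF t] by simp
qed

end

context inst begin

definition pt :: "nat \<Rightarrow> ereal" where
  "pt i = (if v i = 0 then (if c i = 0 then 0 else \<infinity>) else ereal (c i / v i))"

lemma marg: "finite S \<Longrightarrow> i \<in> S \<Longrightarrow> marginal (additive_fun v) S i = v i"
  unfolding marginal_def additive_fun_def by (simp add: sum_diff1)

lemma price_eq: "finite S \<Longrightarrow> price (additive_fun v) c S = (\<Sum>i\<in>S. pt i)"
  unfolding price_def price_term_def pt_def by (intro sum.cong) (auto simp: marg)

lemma price_valid: "valid T \<Longrightarrow> price (additive_fun v) c T = ereal (W T)"
proof -
  assume vT: "valid T"
  then have fT: "finite T" unfolding valid_def using finite_subset by blast
  have "price (additive_fun v) c T = (\<Sum>i\<in>T. ereal (c i / v i))"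
    unfolding price_eq[OF fT] pt_def using vT unfolding valid_def by (intro sum.cong) auto
  then show ?thesis by (simp add: W_def)
qed

lemma profit_valid: "valid T \<Longrightarrow> profit (additive_fun v) c T = prof T"
  unfolding profit_def prof_def using price_valid by (simp add: additive_fun_def Vs_def)

lemma opt_bound:
  assumes I: "I1 n s" and S: "S \<subseteq> {..<n}" and pS: "price (additive_fun v) c S \<le> ereal B"
  shows "(1 - eps) * profit (additive_fun v) c S \<le> s (vr 9)"
proof -
  have fS: "finite S" using S finite_subset by blast
  have bok: "bestOK s" and prev: "\<forall>j'<n. 0 < v j' \<longrightarrow> (\<forall>S\<subseteq>items j'. W S \<le> B \<longrightarrow>
          (1 - W S) * dl j' * real (sum (rn j') S) \<le> s (vr 9))"
    using I unfolding I1_def by blast+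
  have b0: "0 \<le> s (vr 9)" using bestOK_nonneg[OF bok] .
  define S' where "S' = {i\<in>S. 0 < v i}"
  have S'S: "S' \<subseteq> S" unfolding S'_def by auto
  have fS': "finite S'" using fS S'S finite_subset by blast
  have z: "\<forall>i\<in>S - S'. v i = 0"
  proof
    fix i assume "i \<in> S - S'"
    then have "i < n" "\<not> 0 < v i" using S by (auto simp: S'_def)
    then show "v i = 0" using vpos[of i] by linarith
  qed
  have cz: "\<forall>i\<in>S - S'. c i = 0"
  proof (rule ccontr)
    assume "\<not> (\<forall>i\<in>S - S'. c i = 0)"
    then obtain i where i: "i \<in> S" "i \<in> S - S'" "c i \<noteq> 0" by auto
    then have "pt i = \<infinity>" using z unfolding pt_def by auto
    then have "(\<Sum>i\<in>S. pt i) = \<infinity>" using fS i(1) by (intro sum_Pinfty[THEN iffD2]) blast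
    then show False using pS price_eq[OF fS] by simp
  qed
  have pr: "price (additive_fun v) c S = ereal (W S')"
  proof -
    have "(\<Sum>i\<in>S. pt i) = (\<Sum>i\<in>S'. pt i)"
    proof (rule sum.mono_neutral_right[OF fS S'S])
      show "\<forall>i\<in>S - S'. pt i = 0" using z cz unfolding pt_def by simp
    qed
    also have "\<dots> = (\<Sum>i\<in>S'. ereal (c i / v i))"
      by (rule sum.cong) (auto simp: pt_def S'_def)
    finally have "(\<Sum>i\<in>S. pt i) = (\<Sum>i\<in>S'. ereal (c i / v i))" .
    then show ?thesis using price_eq[OF fS] by (simp add: W_def)
  qed
  have fv: "additive_fun v S = Vs S'"
    unfolding additive_fun_def Vs_def by (rule sum.mono_neutral_right[OF fS S'S z])
  have prof: "profit (additive_fun v) c S = prof S'"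
    unfolding profit_def prof_def pr fv by simp
  have WB: "W S' \<le> B" using pS pr by simp
  have W1: "0 \<le> 1 - W S'" using WB B1 by simp
  show ?thesis
  proof (cases "S' = {}")
    case True
    then show ?thesis using prof b0 by (simp add: prof_def Vs_def)
  next
    case False
    define M where "M = Max (v ` S')"
    have "M \<in> v ` S'" unfolding M_def using fS' False by (intro Max_in) auto
    then obtain j where j: "j \<in> S'" "v j = M" by auto
    have jmax: "\<forall>i\<in>S'. v i \<le> v j" using j fS' unfolding M_def by (simp add: Max_ge)
    have jn: "j < n" "0 < v j" using j S unfolding S'_def by auto
    have sub: "S' \<subseteq> items j" using jmax S unfolding items_def S'_def by auto
    have key: "(1 - W S') * dl j * real (sum (rn j) S') \<le> s (vr 9)"
      using prev[rule_format, OF jn sub WB] .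
    have npos: "0 < real n" using jn by simp
    have dl0: "0 \<le> dl j" unfolding dl_def using e0 jn by simp
    have per: "v i - dl j \<le> dl j * real (rn j i)" if "i \<in> S'" for i
    proof -
      have vi: "0 < v i" using that unfolding S'_def by auto
      define x where "x = v i * real n / (eps * v j)"
      have x0: "0 \<le> x" using vi e0 jn unfolding x_def by simp
      have "x - 1 \<le> real (rn j i)" unfolding rn_def x_def[symmetric]
        using x0 floor_correct[of x] by (simp add: of_nat_nat)
      then have "dl j * (x - 1) \<le> dl j * real (rn j i)" using dl0 by (rule mult_left_mono)
      moreover have "dl j * x = v i" unfolding dl_def x_def using npos e0 jn by (simp add: field_simps)
      ultimately show ?thesis by (simp add: right_diff_distrib)
    qed
    have "Vs S' - real (card S') * dl j = (\<Sum>i\<in>S'. v i - dl j)" unfolding Vs_def by (simp add: sum_subtractf)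
    also have "\<dots> \<le> (\<Sum>i\<in>S'. dl j * real (rn j i))" using per by (intro sum_mono) auto
    also have "\<dots> = dl j * real (sum (rn j) S')" by (simp add: sum_distrib_left)
    finally have lb1: "Vs S' - real (card S') * dl j \<le> dl j * real (sum (rn j) S')" .
    have "card S' \<le> n" using S S'S card_mono[of "{..<n}" S'] by auto
    then have "real (card S') * dl j \<le> real n * dl j" using dl0 by (intro mult_right_mono) auto
    also have "\<dots> = eps * v j" unfolding dl_def using npos by simp
    also have "\<dots> \<le> eps * Vs S'" unfolding Vs_def using e0 j fS' S'S vpos S
      by (intro mult_left_mono member_le_sum) (auto simp: S'_def)
    finally have "real (card S') * dl j \<le> eps * Vs S'" .
    then have "(1 - eps) * Vs S' \<le> dl j * real (sum (rn j) S')" using lb1 by (simp add: algebra_simps del: of_nat_sum)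
    then have "(1 - W S') * ((1 - eps) * Vs S') \<le> (1 - W S') * (dl j * real (sum (rn j) S'))"
      using W1 by (rule mult_left_mono)
    then have "(1 - eps) * prof S' \<le> (1 - W S') * dl j * real (sum (rn j) S')"
      by (simp add: prof_def algebra_simps)
    then show ?thesis using key unfolding prof by linarith
  qed
qed

lemma inp0: "inp (input_state n v c B eps)"
  unfolding inp_def input_state_def by auto

lemma s0_high: "3 + 2*n \<le> a \<Longrightarrow> input_state n v c B eps a = 0"
  unfolding input_state_def by auto

lemma output_eq:
  assumes "I6 T b n s" "T \<subseteq> {..<n}"
  shows "output_set n s = T"
  using assms unfolding I6_def output_set_def by auto

lemma time_bound:
  "real (3 + (n+1)*((n+1)*(13*Q+46)+11) + (n+1)*4) \<le> 100 * (real n + 1/eps + 1)^5"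
proof -
  define N where "N = real n + 1/eps + 1"
  have ie: "0 < 1/eps" using e0 by simp
  have N1: "1 \<le> N" unfolding N_def using ie by simp
  define a where "a = real n + 1"
  have a0: "0 \<le> a" and aN: "a \<le> N" unfolding a_def N_def using ie by auto
  have nN: "real n \<le> N" and eN: "1/eps \<le> N" unfolding N_def using ie by auto
  have Qle: "real Q \<le> real n * real n / eps" unfolding Q_def using e0 by (intro of_nat_floor) simp
  also have "\<dots> = real n * real n * (1/eps)" by simp
  also have "\<dots> \<le> N * N * N" using nN eN ie by (intro mult_mono) auto
  finally have QN: "real Q \<le> N^3" by (simp add: power3_eq_cube)
  have p: "N^k \<le> N^5" if "k \<le> 5" for k using that N1 by (rule power_increasing)
  have a2: "a * a \<le> N^2" using aN a0 by (simp add: power2_eq_square mult_mono)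
  have t1: "a * a * real Q \<le> N^5"
  proof -
    have "a * a * real Q \<le> N^2 * N^3" using a2 QN a0 by (intro mult_mono) auto
    then show ?thesis by (simp add: power_add[symmetric])
  qed
  have t2: "a * a \<le> N^5" using a2 p[of 2] by simp
  have t3: "a \<le> N^5" using aN p[of 1] by simp
  have t4: "1 \<le> N^5" using N1 by simp
  have "real (3 + (n+1)*((n+1)*(13*Q+46)+11) + (n+1)*4) = 3 + 13 * (a*a*real Q) + 46 * (a*a) + 15 * a"
    unfolding a_def by (simp add: algebra_simps)
  also have "\<dots> \<le> 100 * N^5" using t1 t2 t3 t4 a0 by linarith
  finally show ?thesis unfolding N_def .
qed

lemma prog_spec:
  "spec prog (input_state n v c B eps) (\<lambda>t s'. (\<exists>T b. valid T \<and> output_set n s' = T \<and> prof T = b \<and>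
     (\<forall>S\<subseteq>{..<n}. price (additive_fun v) c S \<le> ereal B \<longrightarrow> (1 - eps) * profit (additive_fun v) c S \<le> b))
     \<and> t \<le> 3 + (n+1)*((n+1)*(13*Q+46)+11) + (n+1)*4)"
proof -
  define s0 where "s0 = input_state n v c B eps"
  have i0: "inp s0" using inp0 unfolding s0_def .
  have n0: "s0 0 = real n" "s0 2 = eps" using i0 unfolding inp_def by auto
  have hi: "\<And>a. 3 + 2*n \<le> a \<Longrightarrow> s0 a = 0" using s0_high unfolding s0_def .
  have a1: "aval (Floor (Divide (Mult (R (N 0)) (R (N 0))) (R (N 2)))) s0 = real Q"
    using n0 e0 unfolding Q_def by simp
  define s1 where "s1 = s0(vr 7 := real Q)"
  have I1s: "I1 0 s1"
    unfolding I1_def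
  proof (intro conjI)
    show "inp s1" using i0 by (simp add: s1_def)
    show "s1 (vr 0) = real 0" using hi by (simp add: s1_def)
    show "bestOK s1" unfolding bestOK_def
      by (intro exI[of _ "{}"]) (simp add: s1_def hi valid_def W_def prof_def Vs_def code_def B0 less_imp_le)
    show "\<forall>a\<ge>baseJ 0. s1 a = 0"
    proof (intro allI impI)
      fix a assume "baseJ 0 \<le> a"
      then have "a \<noteq> vr 7" "3 + 2*n \<le> a" by (auto simp: baseJ_def vr_def)
      then show "s1 a = 0" using hi by (simp add: s1_def)
    qed
  qed (simp_all add: s1_def)
  show ?thesis
    unfolding prog_def s0_def[symmetric]
    apply (rule spec_SeqI)
    apply (rule spec_vA[OF n0(1) a1])
    apply (fold s1_def)
    apply (rule spec_SeqI)
    apply (rule spec_mono[OF loop1_spec[OF I1s]])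
    subgoal for t1 s2
    proof -
      assume h: "I1 n s2 \<and> t1 \<le> (n + 1) * ((n + 1) * (13 * Q + 46) + 11)"
      then have I: "I1 n s2" by blast
      then have f2: "inp s2" "bestOK s2" unfolding I1_def by blast+
      then obtain T where T: "valid T" "s2 (vr 9) = prof T" "s2 (vr 10) = code T"
        unfolding bestOK_def by blast
      have fT: "finite T" and Tn: "T \<subseteq> {..<n}" using T(1) finite_subset unfolding valid_def by auto
      have n2: "s2 0 = real n" using f2 unfolding inp_def by blast
      define s3 where "s3 = s2(vr 1 := 0, vr 2 := 1)"
      have I6s: "I6 T (prof T) 0 s3" unfolding I6_def s3_def using f2 T by simp
      have opt: "\<forall>S\<subseteq>{..<n}. price (additive_fun v) c S \<le> ereal B \<longrightarrow> (1 - eps) * profit (additive_fun v) c S \<le> prof T"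
        using opt_bound[OF I] T(2) by auto
      show ?thesis
        apply (rule spec_SeqI)
        apply (rule spec_vA[where x = 0])
          apply (rule n2)
         apply simp
        apply (rule spec_SeqI)
        apply (rule spec_vA[where x = 1])
          apply (simp add: n2)
         apply simp
        apply (fold s3_def)
        apply (rule spec_mono[OF loop6_spec[OF I6s fT]])
        using output_eq[OF _ Tn] T(1) opt h by fastforce
    qed
    done
qed

end

theorem mainTheorem18:
  shows "\<exists>prog :: com. \<exists>C :: real. \<exists>k :: nat.
    \<forall>(n :: nat) (v :: nat \<Rightarrow> real) (c :: nat \<Rightarrow> real) (B :: real) (eps :: real).
      (\<forall>i<n. 0 \<le> v i) \<and> (\<forall>i<n. 0 \<le> c i) \<and> (\<Sum>i<n. v i) \<le> 1 \<and>
      0 < B \<and> B \<le> 1 \<and> 0 < eps \<and> eps < 1 \<longrightarrow>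
      (\<exists>t s'. exec prog (input_state n v c B eps) t s' \<and>
         real t \<le> C * (real n + 1 / eps + 1) ^ k \<and>
         output_set n s' \<subseteq> {..<n} \<and>
         price (additive_fun v) c (output_set n s') \<le> ereal B \<and>
         profit (additive_fun v) c (output_set n s')
           \<ge> (1 - eps) * max_profit {..<n} (additive_fun v) c B)"
proof (rule exI[of _ prog], rule exI[of _ "100::real"], rule exI[of _ "5::nat"], intro allI impI)
  fix n v c B eps
  assume h: "(\<forall>i<n. 0 \<le> (v :: nat \<Rightarrow> real) i) \<and> (\<forall>i<n. 0 \<le> (c :: nat \<Rightarrow> real) i) \<and> (\<Sum>i<n. v i) \<le> 1 \<and>
      0 < (B::real) \<and> B \<le> 1 \<and> 0 < (eps::real) \<and> eps < 1"
  interpret inst n v c B eps using h by unfold_locales auto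
  from prog_spec obtain t s' T b where ex: "exec prog (input_state n v c B eps) t s'"
    and T: "valid T" "output_set n s' = T" "prof T = b"
    and opt: "\<forall>S\<subseteq>{..<n}. price (additive_fun v) c S \<le> ereal B \<longrightarrow> (1 - eps) * profit (additive_fun v) c S \<le> b"
    and tb: "t \<le> 3 + (n+1)*((n+1)*(13*Q+46)+11) + (n+1)*4"
    unfolding spec_def by blast
  define M where "M = {profit (additive_fun v) c S | S. S \<subseteq> {..<n} \<and> price (additive_fun v) c S \<le> ereal B}"
  have fM: "finite M"
  proof -
    have "M \<subseteq> (\<lambda>S. profit (additive_fun v) c S) ` Pow {..<n}" unfolding M_def by auto
    then show ?thesis by (rule finite_subset) simp
  qed
  have neM: "M \<noteq> {}"
  proof -
    have "price (additive_fun v) c {} \<le> ereal B" using h by (simp add: price_def)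
    then show ?thesis unfolding M_def by blast
  qed
  have "Max M \<in> M" using fM neM by (rule Max_in)
  then obtain S where S: "S \<subseteq> {..<n}" "price (additive_fun v) c S \<le> ereal B"
    "Max M = profit (additive_fun v) c S" unfolding M_def by blast
  have "(1 - eps) * max_profit {..<n} (additive_fun v) c B \<le> b"
    unfolding max_profit_def M_def[symmetric] S(3) using opt S(1,2) by blast
  moreover have "profit (additive_fun v) c (output_set n s') = b" using T profit_valid by simp
  moreover have "price (additive_fun v) c (output_set n s') \<le> ereal B" using T price_valid
    unfolding valid_def by simp
  moreover have "real t \<le> 100 * (real n + 1 / eps + 1) ^ 5"
    using time_bound tb by (meson of_nat_le_iff order_trans)
  moreover have "output_set n s' \<subseteq> {..<n}" unfolding output_set_def by auto
  ultimately show "\<exists>t s'. exec prog (input_state n v c B eps) t s' \<and>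
         real t \<le> 100 * (real n + 1 / eps + 1) ^ 5 \<and>
         output_set n s' \<subseteq> {..<n} \<and>
         price (additive_fun v) c (output_set n s') \<le> ereal B \<and>
         profit (additive_fun v) c (output_set n s')
           \<ge> (1 - eps) * max_profit {..<n} (additive_fun v) c B"
    using ex by auto
qed

end
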